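(* Let $\mathcal{X}$ be a finite set, $\pi$ a probability distribution on $\mathcal{X}$ with $\pi(x)>0$ for all $x$, $p>1$, $\alpha>0$, and $\mathcal{N}$ a symmetric neighborhood mapping on $\mathcal{X}$ (with $x\notin\mathcal{N}(x)$) such that every stochastic matrix $K$ with $K(x,y)>0$ iff $y\in\mathcal{N}(x)$ is irreducible, and $\max_x|\mathcal{N}(x)|\le p^\alpha$. Suppose there exist a set $\mathcal{X}^*\subset\mathcal{X}$ with $M=|\mathcal{X}^*|\ge 2$, an operator $\mathsf{T}\colon\mathcal{X}\to\mathcal{X}$ and a constant $\nu>\alpha$ such that (i) $\pi(x)=\pi(x')$ for all $x,x'\in\mathcal{X}^*$, (ii) $\mathsf{T}(x)\in\mathcal{N}(x)$ for each $x$, (iii) $\pi(\mathsf{T}(x))\ge p^\nu\pi(x)$ for each $x\notin\mathcal{X}^*$. Let $h\colon(0,\infty)\to(0,\infty)$ be a non-decreasing balancing function ($h(u)=u\,h(1/u)$ for all $u>0$). Define $Z_h(x)=\sum_{y\in\mathcal{N}(x)}h(\pi(y)/\pi(x))$, $K_h(x,y)=\mathbf{1}_{\mathcal{N}(x)}(y)h(\pi(y)/\pi(x))/Z_h(x)$, $\pi_h$ the stationary distribution of $K_h$, $\omega=\pi/\pi_h$, and $Q_h(x,y)=K_h(x,y)/\omega(x)$ for $x\ne y$, $Q_h(x,x)=-\sum_{x'\ne x}Q_h(x,x')$. If the restriction of $K_h$ to $\mathcal{X}^*$ is irreducible, then $$\mathrm{Gap}(Q_h)\ge\frac{\kappa(p,\alpha,\nu)\,h(1)}{3(Mp^{\alpha-\nu}+1)M(M-1)\,\mathbb{E}_\pi[Z_h]},\qquad\kappa(p,\alpha,\nu)=\tfrac12\{1-p^{-(\nu-\alpha)/2}\}^3.$$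 Further, for each of $h(u)=1+u$, $h(u)=\min(1,u)$, $h(u)=\sqrt u$ one has $h(1)\ge1$, and $\mathbb{E}_\pi[Z_h]\le 2p^\alpha$ if $h(u)=1+u$; $\mathbb{E}_\pi[Z_h]\le 2p^{2\alpha-\nu}+M-1$ if $h(u)=\min(1,u)$; $\mathbb{E}_\pi[Z_h]\le p^{2\alpha-\nu}+2p^{\alpha-\nu/2}+M-1$ if $h(u)=\sqrt u$.
   Context: The restriction of a transition matrix $K$ on $\mathcal{X}$ to $S\subset\mathcal{X}$ is the transition matrix $K_S$ on $S$ with $K_S(x,x')=K(x,x')$ for $x\neq x'$ and $K_S(x,x)=1-\sum_{x'\in S\setminus\{x\}}K(x,x')$. $\mathbb{E}_\pi[Z_h]=\sum_x\pi(x)Z_h(x)$. For an irreducible reversible transition rate matrix $Q$ with eigenvalues $0=\lambda_1(Q)>\lambda_2(Q)\ge\cdots$, $\mathrm{Gap}(Q)=-\lambda_2(Q)$. *)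

theory Defs
  imports "HOL-Analysis.Analysis" "HOL-Library.Multiset"
begin

text \<open>The finite state space is the finite type 'a (X = UNIV). Matrices/kernels are
  functions 'a => 'a => real.\<close>

definition stochastic :: "('a::finite \<Rightarrow> 'a \<Rightarrow> real) \<Rightarrow> bool" where
  "stochastic K \<longleftrightarrow> (\<forall>x y. K x y \<ge> 0) \<and> (\<forall>x. (\<Sum>y\<in>UNIV. K x y) = 1)"

definition irreducible_on :: "'a set \<Rightarrow> ('a \<Rightarrow> 'a \<Rightarrow> real) \<Rightarrow> bool" where
  "irreducible_on S K \<longleftrightarrow>
     (\<forall>x\<in>S. \<forall>y\<in>S. (x, y) \<in> {(a, b). a \<in> S \<and> b \<in> S \<and> K a b > 0}\<^sup>*)"

definition irreducible :: "('a \<Rightarrow> 'a \<Rightarrow> real) \<Rightarrow> bool" where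
  "irreducible K \<longleftrightarrow> irreducible_on UNIV K"

text \<open>Restriction K_S of K to S (meaningful for x, y in S).\<close>
definition restrict_kernel :: "('a \<Rightarrow> 'a \<Rightarrow> real) \<Rightarrow> 'a set \<Rightarrow> 'a \<Rightarrow> 'a \<Rightarrow> real" where
  "restrict_kernel K S x y = (if x = y then 1 - (\<Sum>x'\<in>S - {x}. K x x') else K x y)"

definition balancing :: "(real \<Rightarrow> real) \<Rightarrow> bool" where
  "balancing h \<longleftrightarrow> (\<forall>u>0. h u > 0) \<and> mono_on {0<..} h \<and> (\<forall>u>0. h u = u * h (1 / u))"

definition Zh :: "('a \<Rightarrow> real) \<Rightarrow> ('a \<Rightarrow> 'a set) \<Rightarrow> (real \<Rightarrow> real) \<Rightarrow> 'a \<Rightarrow> real" where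
  "Zh \<pi> N h x = (\<Sum>y\<in>N x. h (\<pi> y / \<pi> x))"

definition Kh :: "('a \<Rightarrow> real) \<Rightarrow> ('a \<Rightarrow> 'a set) \<Rightarrow> (real \<Rightarrow> real) \<Rightarrow> 'a \<Rightarrow> 'a \<Rightarrow> real" where
  "Kh \<pi> N h x y = (if y \<in> N x then h (\<pi> y / \<pi> x) / Zh \<pi> N h x else 0)"

definition stationary_dist :: "('a::finite \<Rightarrow> 'a \<Rightarrow> real) \<Rightarrow> 'a \<Rightarrow> real" where
  "stationary_dist K = (THE \<mu>. (\<forall>x. \<mu> x \<ge> 0) \<and> (\<Sum>x\<in>UNIV. \<mu> x) = 1 \<and>
                               (\<forall>y. (\<Sum>x\<in>UNIV. \<mu> x * K x y) = \<mu> y))"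

definition Qh :: "('a::finite \<Rightarrow> real) \<Rightarrow> ('a \<Rightarrow> 'a set) \<Rightarrow> (real \<Rightarrow> real) \<Rightarrow> 'a \<Rightarrow> 'a \<Rightarrow> real" where
  "Qh \<pi> N h x y =
     (let K = Kh \<pi> N h; \<omega> = (\<lambda>z. \<pi> z / stationary_dist K z) in
      if x \<noteq> y then K x y / \<omega> x else - (\<Sum>x'\<in>UNIV - {x}. K x x' / \<omega> x))"

definition expect :: "('a::finite \<Rightarrow> real) \<Rightarrow> ('a \<Rightarrow> real) \<Rightarrow> real" where
  "expect \<pi> f = (\<Sum>x\<in>UNIV. \<pi> x * f x)"

definition to_mat :: "('a::finite \<Rightarrow> 'a \<Rightarrow> real) \<Rightarrow> real^'a^'a" where
  "to_mat Q = (\<chi> i j. Q i j)"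

definition eig_mset :: "('a::finite \<Rightarrow> 'a \<Rightarrow> real) \<Rightarrow> real multiset" where
  "eig_mset Q = (\<Sum>c\<in>{c. \<exists>v. v \<noteq> 0 \<and> to_mat Q *v v = c *\<^sub>R v}.
                   replicate_mset (dim {v. to_mat Q *v v = c *\<^sub>R v}) c)"

definition eig_desc :: "('a::finite \<Rightarrow> 'a \<Rightarrow> real) \<Rightarrow> real list" where
  "eig_desc Q = rev (sorted_list_of_multiset (eig_mset Q))"

definition Gap :: "('a::finite \<Rightarrow> 'a \<Rightarrow> real) \<Rightarrow> real" where
  "Gap Q = - (eig_desc Q ! 1)"

definition kappa :: "real \<Rightarrow> real \<Rightarrow> real \<Rightarrow> real" where
  "kappa p \<alpha> \<nu> = (1/2) * (1 - p powr (-(\<nu> - \<alpha>) / 2)) ^ 3"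

end

theory Submission
  imports Defs "HOL-Library.Transitive_Closure_Table"
begin

lemma adj_id:
  fixes A :: "'a::finite \<Rightarrow> 'a \<Rightarrow> real"
  assumes sym: "\<And>x y. w x * A x y = w y * A y x"
  shows "(\<Sum>x\<in>UNIV. w x * u x * (\<Sum>y\<in>UNIV. A x y * v y)) =
         (\<Sum>x\<in>UNIV. w x * v x * (\<Sum>y\<in>UNIV. A x y * u y))"
proof -
  have "(\<Sum>x\<in>UNIV. w x * u x * (\<Sum>y\<in>UNIV. A x y * v y)) =
        (\<Sum>x\<in>UNIV. \<Sum>y\<in>UNIV. (w y * A y x) * u x * v y)"
    by (simp add: sum_distrib_left sym mult_ac)
  also have "\<dots> = (\<Sum>y\<in>UNIV. \<Sum>x\<in>UNIV. (w y * A y x) * u x * v y)"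
    by (rule sum.swap)
  also have "\<dots> = (\<Sum>x\<in>UNIV. w x * v x * (\<Sum>y\<in>UNIV. A x y * u y))"
    by (simp add: sum_distrib_left mult_ac)
  finally show ?thesis .
qed

lemma col_zero:
  fixes A :: "'a::finite \<Rightarrow> 'a \<Rightarrow> real"
  assumes sym: "\<And>x y. w x * A x y = w y * A y x" and rows: "\<And>x. (\<Sum>y\<in>UNIV. A x y) = 0"
  shows "(\<Sum>x\<in>UNIV. w x * (\<Sum>y\<in>UNIV. A x y * v y)) = 0"
proof -
  have "(\<Sum>x\<in>UNIV. w x * (\<Sum>y\<in>UNIV. A x y * v y)) =
     (\<Sum>x\<in>UNIV. w x * (\<lambda>_. 1) x * (\<Sum>y\<in>UNIV. A x y * v y))" by simp
  also have "\<dots> = (\<Sum>x\<in>UNIV. w x * v x * (\<Sum>y\<in>UNIV. A x y * 1))"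
    by (rule adj_id[OF sym])
  also have "\<dots> = 0" using rows by simp
  finally show ?thesis .
qed

lemma quad_id:
  fixes A :: "'a::finite \<Rightarrow> 'a \<Rightarrow> real"
  assumes sym: "\<And>x y. w x * A x y = w y * A y x" and rows: "\<And>x. (\<Sum>y\<in>UNIV. A x y) = 0"
  shows "(\<Sum>x\<in>UNIV. w x * f x * (\<Sum>y\<in>UNIV. A x y * f y)) =
         - (\<Sum>x\<in>UNIV. \<Sum>y\<in>UNIV. w x * A x y * (f x - f y)^2) / 2"
proof -
  define S1 where "S1 = (\<Sum>x\<in>UNIV. \<Sum>y\<in>UNIV. w x * A x y * f x * f y)"
  have L: "(\<Sum>x\<in>UNIV. w x * f x * (\<Sum>y\<in>UNIV. A x y * f y)) = S1"
    by (simp add: S1_def sum_distrib_left mult_ac)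
  have e1: "(\<Sum>x\<in>UNIV. \<Sum>y\<in>UNIV. w x * A x y * (f x)^2) = 0"
  proof -
    have "(\<Sum>x\<in>UNIV. \<Sum>y\<in>UNIV. w x * A x y * (f x)^2) = (\<Sum>x\<in>UNIV. w x * (f x)^2 * (\<Sum>y\<in>UNIV. A x y))"
      unfolding sum_distrib_left by (simp add: mult_ac)
    then show ?thesis using rows by simp
  qed
  have e3: "(\<Sum>x\<in>UNIV. \<Sum>y\<in>UNIV. w x * A x y * (f y)^2) = 0"
  proof -
    have "(\<Sum>x\<in>UNIV. \<Sum>y\<in>UNIV. w x * A x y * (f y)^2) = (\<Sum>x\<in>UNIV. \<Sum>y\<in>UNIV. w y * A y x * (f y)^2)"
      by (simp add: sym)
    also have "\<dots> = (\<Sum>y\<in>UNIV. \<Sum>x\<in>UNIV. w y * A y x * (f y)^2)" by (rule sum.swap)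
    also have "\<dots> = (\<Sum>y\<in>UNIV. w y * (f y)^2 * (\<Sum>x\<in>UNIV. A y x))"
      unfolding sum_distrib_left by (simp add: mult_ac)
    finally show ?thesis using rows by simp
  qed
  have "(\<Sum>x\<in>UNIV. \<Sum>y\<in>UNIV. w x * A x y * (f x - f y)^2) =
        (\<Sum>x\<in>UNIV. \<Sum>y\<in>UNIV. w x * A x y * (f x)^2) - 2 * S1 + (\<Sum>x\<in>UNIV. \<Sum>y\<in>UNIV. w x * A x y * (f y)^2)"
    by (simp add: S1_def power2_diff algebra_simps sum.distrib sum_subtractf sum_distrib_left)
  then show ?thesis using L e1 e3 by simp
qed

lemma quad_zero:
  fixes a b :: real
  assumes "\<forall>t. a * t + b * t^2 \<le> 0"
  shows "a = 0"
proof -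
  define t where "t = a / (\<bar>b\<bar> + 1)"
  have pos: "\<bar>b\<bar> + 1 > 0" by simp
  have tb: "t * (\<bar>b\<bar> + 1) = a" using pos unfolding t_def by simp
  have "a * t + b * t^2 \<le> 0" using assms by blast
  hence "(a * t + b * t^2) * (\<bar>b\<bar> + 1)^2 \<le> 0"
    by (simp add: mult_nonpos_nonneg)
  moreover have "(a * t + b * t^2) * (\<bar>b\<bar> + 1)^2 = a * (t * (\<bar>b\<bar> + 1)) * (\<bar>b\<bar> + 1) + b * (t * (\<bar>b\<bar> + 1))^2"
    by (simp add: algebra_simps power2_eq_square)
  ultimately have "a * a * (\<bar>b\<bar> + 1) + b * a^2 \<le> 0" using tb by simp
  then have "a^2 * (\<bar>b\<bar> + b + 1) \<le> 0" by (simp add: algebra_simps power2_eq_square)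
  moreover have "\<bar>b\<bar> + b + 1 > 0" by linarith
  ultimately have "a^2 \<le> 0" by (simp add: mult_le_0_iff)
  thus ?thesis by simp
qed

lemma expand_R:
  fixes A :: "'a::finite \<Rightarrow> 'a \<Rightarrow> real"
  shows "(\<Sum>x\<in>UNIV. w x * (f x + t * g x) * (\<Sum>y\<in>UNIV. A x y * (f y + t * g y))) =
    (\<Sum>x\<in>UNIV. w x * f x * (\<Sum>y\<in>UNIV. A x y * f y)) +
    t * ((\<Sum>x\<in>UNIV. w x * f x * (\<Sum>y\<in>UNIV. A x y * g y)) + (\<Sum>x\<in>UNIV. w x * g x * (\<Sum>y\<in>UNIV. A x y * f y))) +
    t^2 * (\<Sum>x\<in>UNIV. w x * g x * (\<Sum>y\<in>UNIV. A x y * g y))"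
proof -
  define P where "P = (\<lambda>x. w x * f x * (\<Sum>y\<in>UNIV. A x y * f y))"
  define Q1 where "Q1 = (\<lambda>x. w x * f x * (\<Sum>y\<in>UNIV. A x y * g y))"
  define Q2 where "Q2 = (\<lambda>x. w x * g x * (\<Sum>y\<in>UNIV. A x y * f y))"
  define S where "S = (\<lambda>x. w x * g x * (\<Sum>y\<in>UNIV. A x y * g y))"
  have pw: "w x * (f x + t * g x) * (\<Sum>y\<in>UNIV. A x y * (f y + t * g y)) =
     P x + t * (Q1 x + Q2 x) + t^2 * S x" for x
  proof -
    have "(\<Sum>y\<in>UNIV. A x y * (f y + t * g y)) = (\<Sum>y\<in>UNIV. A x y * f y) + t * (\<Sum>y\<in>UNIV. A x y * g y)"
      by (simp add: algebra_simps sum.distrib sum_distrib_left)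
    then show ?thesis unfolding P_def Q1_def Q2_def S_def by (simp add: algebra_simps power2_eq_square)
  qed
  have "(\<Sum>x\<in>UNIV. w x * (f x + t * g x) * (\<Sum>y\<in>UNIV. A x y * (f y + t * g y))) =
     (\<Sum>x\<in>UNIV. P x + t * (Q1 x + Q2 x) + t^2 * S x)" by (simp add: pw)
  also have "\<dots> = sum P UNIV + t * (sum Q1 UNIV + sum Q2 UNIV) + t^2 * sum S UNIV"
    by (simp add: sum.distrib sum_distrib_left[symmetric])
  finally show ?thesis unfolding P_def Q1_def Q2_def S_def .
qed

lemma expand_N:
  fixes w :: "'a::finite \<Rightarrow> real"
  shows "(\<Sum>x\<in>UNIV. w x * (f x + t * g x)^2) =
    (\<Sum>x\<in>UNIV. w x * (f x)^2) + t * (2 * (\<Sum>x\<in>UNIV. w x * f x * g x)) + t^2 * (\<Sum>x\<in>UNIV. w x * (g x)^2)"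
proof -
  have "\<And>x. w x * (f x + t * g x)^2 = w x * (f x)^2 + t * (2 * (w x * f x * g x)) + t^2 * (w x * (g x)^2)"
    by (simp add: algebra_simps power2_eq_square)
  then show ?thesis by (simp add: sum.distrib sum_distrib_left)
qed

lemma sumsq_zero:
  fixes w :: "'a::finite \<Rightarrow> real"
  assumes "\<forall>x. w x > 0" "(\<Sum>x\<in>UNIV. w x * (f x)^2) = 0"
  shows "f x = 0"
proof -
  have "\<forall>x\<in>UNIV. w x * (f x)^2 = 0"
    using assms by (subst sum_nonneg_eq_0_iff[symmetric]) (auto, metis less_imp_le mult_nonneg_nonneg zero_le_power2)
  then show ?thesis using assms(1) by (metis UNIV_I mult_eq_0_iff order_less_irrefl power_eq_0_iff)
qed

lemma sumsq_pos:
  fixes w :: "'a::finite \<Rightarrow> real"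
  assumes "\<forall>x. w x > 0" "f a \<noteq> 0"
  shows "(\<Sum>x\<in>UNIV. w x * (f x)^2) > 0"
proof -
  have "(\<Sum>x\<in>UNIV. w x * (f x)^2) \<ge> w a * (f a)^2"
    by (rule member_le_sum) (use assms in \<open>auto, metis less_imp_le mult_nonneg_nonneg zero_le_power2\<close>)
  moreover have "w a * (f a)^2 > 0" using assms by simp
  ultimately show ?thesis by linarith
qed

lemma exists_eigvec:
  fixes A :: "'a::finite \<Rightarrow> 'a \<Rightarrow> real"
  assumes wpos: "\<forall>x. w x > 0"
    and sym: "\<And>x y. w x * A x y = w y * A y x" and rows: "\<And>x. (\<Sum>y\<in>UNIV. A x y) = 0"
    and ab: "(a::'a) \<noteq> b"
  shows "\<exists>v::real^'a. v \<noteq> 0 \<and> (\<Sum>x\<in>UNIV. w x * v$x) = 0 \<and> (\<exists>c. \<forall>x. (\<Sum>y\<in>UNIV. A x y * v$y) = c * v$x)"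
proof -
  define R where "R = (\<lambda>v::real^'a. \<Sum>x\<in>UNIV. w x * v$x * (\<Sum>y\<in>UNIV. A x y * v$y))"
  define N2 where "N2 = (\<lambda>v::real^'a. \<Sum>x\<in>UNIV. w x * (v$x)^2)"
  define W where "W = {v::real^'a. (\<Sum>x\<in>UNIV. w x * v$x) = 0 \<and> N2 v = 1}"
  have Rscale: "R (c *\<^sub>R u) = c^2 * R u" for c u
    by (simp add: R_def sum_distrib_left algebra_simps power2_eq_square)
  have Nscale: "N2 (c *\<^sub>R u) = c^2 * N2 u" for c u
    by (simp add: N2_def sum_distrib_left algebra_simps power2_eq_square)
  have Nnn: "N2 u \<ge> 0" for u
    unfolding N2_def by (rule sum_nonneg) (use wpos in \<open>auto, metis less_imp_le mult_nonneg_nonneg zero_le_power2\<close>)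
  define v0 where "v0 = ((\<chi> x. (if x = a then w b else 0) + (if x = b then - w a else 0)) :: real^'a)"
  have v0s: "(\<Sum>x\<in>UNIV. w x * v0$x) = 0"
  proof -
    have "w x * v0$x = (if x = a then w a * w b else 0) + (if x = b then - (w b * w a) else 0)" for x
      by (simp add: v0_def)
    then have "(\<Sum>x\<in>UNIV. w x * v0$x) = (\<Sum>x\<in>UNIV. (if x = a then w a * w b else 0) + (if x = b then - (w b * w a) else 0))"
      by presburger
    also have "\<dots> = 0" by (simp add: sum.distrib)
    finally show ?thesis .
  qed
  have "v0$a \<noteq> 0" using ab wpos by (simp add: v0_def) (metis less_irrefl)
  then have v0p: "N2 v0 > 0" unfolding N2_def by (rule sumsq_pos[OF wpos])
  define v1 where "v1 = (1 / sqrt (N2 v0)) *\<^sub>R v0"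
  have "(\<Sum>x\<in>UNIV. w x * v1$x) = (\<Sum>x\<in>UNIV. w x * v0$x) / sqrt (N2 v0)"
    by (simp add: v1_def sum_divide_distrib)
  moreover have "N2 v1 = (1 / sqrt (N2 v0))^2 * N2 v0" unfolding v1_def by (rule Nscale)
  ultimately have "v1 \<in> W"
    using v0s v0p unfolding W_def by (simp add: power_divide)
  then have Wne: "W \<noteq> {}" by blast
  have cW: "compact W"
  proof (rule compact_eq_bounded_closed[THEN iffD2], rule conjI)
    define B where "B = 1 + (\<Sum>x\<in>UNIV. 1 / w x)"
    have "norm v \<le> real CARD('a) * B" if "v \<in> W" for v
    proof -
      have comp: "\<bar>v$x\<bar> \<le> B" for x
      proof -
        have "w x * (v$x)^2 \<le> N2 v"
          unfolding N2_def by (rule member_le_sum) (use wpos in \<open>auto, metis less_imp_le mult_nonneg_nonneg zero_le_power2\<close>)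
        then have "w x * (v$x)^2 \<le> 1" using that by (simp add: W_def)
        then have "(v$x)^2 \<le> 1 / w x" using wpos by (simp add: field_simps mult.commute)
        moreover have "1 / w x \<le> (\<Sum>x\<in>UNIV. 1 / w x)"
          by (rule member_le_sum) (use wpos in \<open>auto intro: less_imp_le\<close>)
        moreover have "\<bar>v$x\<bar> \<le> 1 + (v$x)^2"
        proof (cases "\<bar>v$x\<bar> \<le> 1")
          case True then show ?thesis by (smt (verit) zero_le_power2)
        next
          case False
          then have "\<bar>v$x\<bar> * 1 \<le> \<bar>v$x\<bar> * \<bar>v$x\<bar>" by (intro mult_left_mono) auto
          then show ?thesis by (simp add: power2_eq_square)
        qed
        ultimately show ?thesis unfolding B_def by linarith
      qed
      have "norm v \<le> (\<Sum>i\<in>UNIV. \<bar>v$i\<bar>)" by (rule norm_le_l1_cart)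
      also have "\<dots> \<le> (\<Sum>i\<in>(UNIV::'a set). B)" by (rule sum_mono) (rule comp)
      finally show ?thesis by simp
    qed
    then show "bounded W" unfolding bounded_iff by blast
    have "closed {v::real^'a. (\<Sum>x\<in>UNIV. w x * v$x) = 0}"
      by (rule closed_Collect_eq) (intro continuous_intros)+
    moreover have "closed {v::real^'a. N2 v = 1}"
      unfolding N2_def by (rule closed_Collect_eq) (intro continuous_intros)+
    ultimately show "closed W" unfolding W_def by (simp add: Collect_conj_eq closed_Int)
  qed
  have "continuous_on W R" unfolding R_def by (intro continuous_intros)
  then obtain v where vW: "v \<in> W" and vmax: "\<forall>u\<in>W. R u \<le> R v"
    using continuous_attains_sup[OF cW Wne] by blast
  define lam where "lam = R v"
  have claim1: "R u \<le> lam * N2 u" if "(\<Sum>x\<in>UNIV. w x * u$x) = 0" for u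
  proof (cases "N2 u = 0")
    case True
    then have "u$x = 0" for x using sumsq_zero[OF wpos, of "\<lambda>x. u$x"] by (simp add: N2_def)
    then show ?thesis using True by (simp add: R_def)
  next
    case False
    then have Np: "N2 u > 0" using Nnn[of u] by linarith
    define s where "s = sqrt (N2 u)"
    have sp: "s > 0" and s2: "s^2 = N2 u" using Np by (auto simp: s_def)
    have "(\<Sum>x\<in>UNIV. w x * ((1/s) *\<^sub>R u)$x) = (\<Sum>x\<in>UNIV. w x * u$x) / s"
      by (simp add: sum_divide_distrib)
    moreover have "N2 ((1/s) *\<^sub>R u) = (1 / s)^2 * N2 u" by (rule Nscale)
    ultimately have "(1/s) *\<^sub>R u \<in> W"
      unfolding W_def using that sp s2 False by (simp add: power_divide)
    then have "R ((1/s) *\<^sub>R u) \<le> lam" using vmax lam_def by blast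
    then have "R u / s^2 \<le> lam" by (simp add: Rscale power_divide)
    then show ?thesis using sp s2 Np by (simp add: divide_le_eq mult.commute)
  qed
  define Av where "Av = (\<lambda>x. \<Sum>y\<in>UNIV. A x y * v$y)"
  have claim2: "(\<Sum>x\<in>UNIV. w x * u$x * Av x) = lam * (\<Sum>x\<in>UNIV. w x * v$x * u$x)"
    if u0: "(\<Sum>x\<in>UNIV. w x * u$x) = 0" for u
  proof -
    define B where "B = (\<Sum>x\<in>UNIV. w x * u$x * Av x)"
    define C where "C = (\<Sum>x\<in>UNIV. w x * v$x * u$x)"
    have vs: "(\<Sum>x\<in>UNIV. w x * v$x) = 0" and vn: "N2 v = 1" using vW by (auto simp: W_def)
    have "(2 * (B - lam * C)) * t + (R u - lam * N2 u) * t^2 \<le> 0" for t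
    proof -
      have s0: "(\<Sum>x\<in>UNIV. w x * (v + t *\<^sub>R u)$x) = 0"
        using vs u0 by (simp add: algebra_simps sum.distrib sum_distrib_left[symmetric])
      have "R (v + t *\<^sub>R u) \<le> lam * N2 (v + t *\<^sub>R u)" by (rule claim1[OF s0])
      moreover have "R (v + t *\<^sub>R u) = lam + t * (2 * B) + t^2 * R u"
      proof -
        have "R (v + t *\<^sub>R u) = (\<Sum>x\<in>UNIV. w x * (v$x + t * u$x) * (\<Sum>y\<in>UNIV. A x y * (v$y + t * u$y)))"
          by (simp add: R_def)
        also have "\<dots> = R v + t * ((\<Sum>x\<in>UNIV. w x * v$x * (\<Sum>y\<in>UNIV. A x y * u$y)) + B) + t^2 * R u"
          unfolding expand_R by (simp add: R_def B_def Av_def)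
        also have "(\<Sum>x\<in>UNIV. w x * v$x * (\<Sum>y\<in>UNIV. A x y * u$y)) = B"
          unfolding B_def Av_def by (rule adj_id[OF sym])
        finally show ?thesis by (simp add: lam_def)
      qed
      moreover have "N2 (v + t *\<^sub>R u) = 1 + t * (2 * C) + t^2 * N2 u"
      proof -
        have "N2 (v + t *\<^sub>R u) = (\<Sum>x\<in>UNIV. w x * (v$x + t * u$x)^2)" by (simp add: N2_def)
        also have "\<dots> = N2 v + t * (2 * C) + t^2 * N2 u"
          unfolding expand_N by (simp add: N2_def C_def)
        finally show ?thesis using vn by simp
      qed
      ultimately show ?thesis by (simp add: algebra_simps)
    qed
    then have "2 * (B - lam * C) = 0" by (intro quad_zero) blast
    then show ?thesis by (simp add: B_def C_def)
  qed
  define u where "u = (\<chi> x. Av x - lam * v$x)"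
  have vs: "(\<Sum>x\<in>UNIV. w x * v$x) = 0" and vn: "N2 v = 1" using vW by (auto simp: W_def)
  have Avs: "(\<Sum>x\<in>UNIV. w x * Av x) = 0" unfolding Av_def by (rule col_zero[OF sym rows])
  have us: "(\<Sum>x\<in>UNIV. w x * u$x) = 0"
    using vs Avs by (simp add: u_def algebra_simps sum_subtractf sum_distrib_left[symmetric])
  have "(\<Sum>x\<in>UNIV. w x * (u$x)^2) = (\<Sum>x\<in>UNIV. w x * u$x * Av x) - lam * (\<Sum>x\<in>UNIV. w x * v$x * u$x)"
    by (simp add: u_def power2_eq_square algebra_simps sum_subtractf sum_distrib_left sum.distrib)
  also have "\<dots> = 0" using claim2[OF us] by simp
  finally have "u$x = 0" for x using sumsq_zero[OF wpos, of "\<lambda>x. u$x"] by simp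
  then have eig: "\<forall>x. (\<Sum>y\<in>UNIV. A x y * v$y) = lam * v$x" by (simp add: u_def Av_def)
  have "v \<noteq> 0" using vn by (auto simp: N2_def)
  then show ?thesis using vs eig by blast
qed

lemma eig_iff:
  fixes A :: "'a::finite \<Rightarrow> 'a \<Rightarrow> real"
  shows "to_mat A *v v = c *\<^sub>R v \<longleftrightarrow> (\<forall>x. (\<Sum>y\<in>UNIV. A x y * v$y) = c * v$x)"
  by (simp add: vec_eq_iff to_mat_def matrix_vector_mult_def)

lemma gap_abstract:
  fixes A :: "'a::finite \<Rightarrow> 'a \<Rightarrow> real"
  assumes wpos: "\<forall>x. w x > 0" and wsum: "(\<Sum>x\<in>UNIV. w x) = 1"
    and sym: "\<And>x y. w x * A x y = w y * A y x" and rows: "\<And>x. (\<Sum>y\<in>UNIV. A x y) = 0"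
    and ab: "(a::'a) \<noteq> b" and gpos: "g > 0"
    and poinc: "\<And>f. (\<Sum>x\<in>UNIV. w x * f x) = 0 \<Longrightarrow>
        g * (\<Sum>x\<in>UNIV. w x * (f x)^2) \<le> (\<Sum>x\<in>UNIV. \<Sum>y\<in>UNIV. w x * A x y * (f x - f y)^2) / 2"
  shows "g \<le> Gap A"
proof -
  define E where "E = {c. \<exists>v. v \<noteq> 0 \<and> to_mat A *v v = c *\<^sub>R v}"
  define ES where "ES = (\<lambda>c. {v. to_mat A *v v = c *\<^sub>R v})"
  have nonz: "\<exists>x. v$x \<noteq> 0" if "v \<noteq> (0::real^'a)" for v
    using that by (auto simp: vec_eq_iff)
  have ray: "c \<le> -g" if eig: "\<forall>x. (\<Sum>y\<in>UNIV. A x y * v$y) = c * v$x"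
      and m0: "(\<Sum>x\<in>UNIV. w x * v$x) = 0" and vnz: "v \<noteq> 0" for v c
  proof -
    obtain x0 where "v$x0 \<noteq> 0" using nonz[OF vnz] by blast
    then have Np: "(\<Sum>x\<in>UNIV. w x * (v$x)^2) > 0" by (rule sumsq_pos[OF wpos])
    have "(\<Sum>x\<in>UNIV. w x * v$x * (\<Sum>y\<in>UNIV. A x y * v$y)) = c * (\<Sum>x\<in>UNIV. w x * (v$x)^2)"
      using eig by (simp add: sum_distrib_left power2_eq_square mult_ac)
    moreover have "(\<Sum>x\<in>UNIV. w x * v$x * (\<Sum>y\<in>UNIV. A x y * v$y)) =
        - (\<Sum>x\<in>UNIV. \<Sum>y\<in>UNIV. w x * A x y * (v$x - v$y)^2) / 2"
      by (rule quad_id[OF sym rows])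
    moreover have "g * (\<Sum>x\<in>UNIV. w x * (v$x)^2) \<le> (\<Sum>x\<in>UNIV. \<Sum>y\<in>UNIV. w x * A x y * (v$x - v$y)^2) / 2"
      using poinc[of "\<lambda>x. v$x"] m0 by simp
    ultimately have "(g + c) * (\<Sum>x\<in>UNIV. w x * (v$x)^2) \<le> 0" by (simp add: algebra_simps)
    then have "g + c \<le> 0" using Np by (simp add: mult_le_0_iff)
    then show ?thesis by simp
  qed
  have P1: "c = 0 \<or> c \<le> -g" if cE: "c \<in> E" for c
  proof -
    obtain v where vnz: "v \<noteq> 0" and eig: "\<forall>x. (\<Sum>y\<in>UNIV. A x y * v$y) = c * v$x"
      using cE by (auto simp: E_def eig_iff)
    have "(\<Sum>x\<in>UNIV. w x * (\<Sum>y\<in>UNIV. A x y * v$y)) = 0" by (rule col_zero[OF sym rows])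
    then have "c * (\<Sum>x\<in>UNIV. w x * v$x) = 0" using eig by (simp add: sum_distrib_left mult_ac)
    then show ?thesis using ray[OF eig _ vnz] by auto
  qed
  define one where "one = ((\<chi> x. 1) :: real^'a)"
  have one_nz: "one \<noteq> 0" by (simp add: one_def vec_eq_iff)
  have ES0: "ES 0 = span {one}"
  proof
    show "span {one} \<subseteq> ES 0"
    proof
      fix v assume "v \<in> span {one}"
      then obtain k where "v = k *\<^sub>R one" by (auto simp: span_singleton)
      then show "v \<in> ES 0" using rows
        by (simp add: ES_def eig_iff one_def sum_distrib_right[symmetric])
    qed
    show "ES 0 \<subseteq> span {one}"
    proof
      fix v assume "v \<in> ES 0"
      then have eig: "\<forall>x. (\<Sum>y\<in>UNIV. A x y * v$y) = 0" by (simp add: ES_def eig_iff)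
      define m where "m = (\<Sum>x\<in>UNIV. w x * v$x)"
      define f where "f = (\<lambda>x. v$x - m)"
      have fm: "(\<Sum>x\<in>UNIV. w x * f x) = 0"
        using wsum by (simp add: f_def m_def algebra_simps sum_subtractf sum_distrib_right[symmetric])
      have Af: "(\<Sum>y\<in>UNIV. A x y * f y) = 0" for x
      proof -
        have "(\<Sum>y\<in>UNIV. A x y * f y) = (\<Sum>y\<in>UNIV. A x y * v$y) - m * (\<Sum>y\<in>UNIV. A x y)"
          by (simp add: f_def algebra_simps sum_subtractf sum_distrib_left)
        then show ?thesis using eig rows by simp
      qed
      have "(\<Sum>x\<in>UNIV. w x * f x * (\<Sum>y\<in>UNIV. A x y * f y)) =
        - (\<Sum>x\<in>UNIV. \<Sum>y\<in>UNIV. w x * A x y * (f x - f y)^2) / 2"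
        by (rule quad_id[OF sym rows])
      then have "(\<Sum>x\<in>UNIV. \<Sum>y\<in>UNIV. w x * A x y * (f x - f y)^2) = 0" using Af by simp
      then have "g * (\<Sum>x\<in>UNIV. w x * (f x)^2) \<le> 0" using poinc[OF fm] by simp
      moreover have "(\<Sum>x\<in>UNIV. w x * (f x)^2) \<ge> 0"
        by (rule sum_nonneg) (use wpos in \<open>auto, metis less_imp_le mult_nonneg_nonneg zero_le_power2\<close>)
      ultimately have "(\<Sum>x\<in>UNIV. w x * (f x)^2) = 0" using gpos by (simp add: mult_le_0_iff)
      then have "f x = 0" for x by (rule sumsq_zero[OF wpos])
      then have "v = m *\<^sub>R one" by (simp add: f_def one_def vec_eq_iff)
      then show "v \<in> span {one}" by (simp add: span_singleton) blast
    qed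
  qed
  have dim0: "dim (ES 0) = 1" using one_nz by (simp add: ES0)
  have zeroE: "0 \<in> E"
  proof -
    have "one \<in> ES 0" unfolding ES0 by (simp add: span_base)
    then show ?thesis using one_nz by (auto simp: E_def ES_def)
  qed
  obtain v2 where v2nz: "v2 \<noteq> 0" and v2m: "(\<Sum>x\<in>UNIV. w x * v2$x) = 0"
      and "\<exists>c. \<forall>x. (\<Sum>y\<in>UNIV. A x y * v2$y) = c * v2$x"
    using exists_eigvec[OF wpos sym rows ab] by blast
  then obtain c2 where eig2: "\<forall>x. (\<Sum>y\<in>UNIV. A x y * v2$y) = c2 * v2$x" by blast
  have c2g: "c2 \<le> -g" by (rule ray[OF eig2 v2m v2nz])
  have c2E: "c2 \<in> E" using v2nz eig2 by (auto simp: E_def eig_iff)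
  have dim2: "dim (ES c2) \<ge> 1"
  proof -
    have "v2 \<in> ES c2" using eig2 by (simp add: ES_def eig_iff)
    then have "\<not> ES c2 \<subseteq> {0}" using v2nz by blast
    then have "dim (ES c2) \<noteq> 0" using dim_eq_0[of "ES c2"] by blast
    then show ?thesis by linarith
  qed
  have finE: "finite E"
  proof -
    define ev where "ev = (\<lambda>c. SOME v. v \<noteq> 0 \<and> (\<forall>x. (\<Sum>y\<in>UNIV. A x y * v$y) = c * v$x))"
    have ev: "ev c \<noteq> 0 \<and> (\<forall>x. (\<Sum>y\<in>UNIV. A x y * (ev c)$y) = c * (ev c)$x)" if "c \<in> E" for c
    proof -
      have "\<exists>v. v \<noteq> 0 \<and> (\<forall>x. (\<Sum>y\<in>UNIV. A x y * v$y) = c * v$x)"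
        using that by (auto simp: E_def eig_iff)
      then show ?thesis unfolding ev_def by (rule someI_ex)
    qed
    define phi where "phi = (\<lambda>v::real^'a. (\<chi> x. sqrt (w x) * v$x) :: real^'a)"
    have phi_inj: "v = u" if "phi v = phi u" for u v
    proof -
      have "sqrt (w x) * v$x = sqrt (w x) * u$x" for x
        using that by (simp add: phi_def vec_eq_iff)
      moreover have "sqrt (w x) \<noteq> 0" for x using wpos[rule_format, of x] by simp
      ultimately have "v$x = u$x" for x by simp
      then show ?thesis by (simp add: vec_eq_iff)
    qed
    have orth: "(\<Sum>x\<in>UNIV. w x * u$x * v$x) = 0"
      if "\<forall>x. (\<Sum>y\<in>UNIV. A x y * u$y) = c * u$x" "\<forall>x. (\<Sum>y\<in>UNIV. A x y * v$y) = d * v$x" "c \<noteq> d"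
      for u v c d
    proof -
      have "(\<Sum>x\<in>UNIV. w x * v$x * (\<Sum>y\<in>UNIV. A x y * u$y)) = (\<Sum>x\<in>UNIV. w x * u$x * (\<Sum>y\<in>UNIV. A x y * v$y))"
        by (rule adj_id[OF sym])
      then have "c * (\<Sum>x\<in>UNIV. w x * u$x * v$x) = d * (\<Sum>x\<in>UNIV. w x * u$x * v$x)"
        using that by (simp add: sum_distrib_left mult_ac)
      then show ?thesis using that(3) by simp
    qed
    have phi_inner: "phi u \<bullet> phi v = (\<Sum>x\<in>UNIV. w x * u$x * v$x)" for u v
    proof -
      have "sqrt (w x) * sqrt (w x) = w x" for x using wpos by (simp add: less_imp_le)
      then show ?thesis by (simp add: phi_def inner_vec_def mult_ac)
    qed
    define S where "S = (\<lambda>c. phi (ev c)) ` E"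
    have "pairwise orthogonal S"
      unfolding pairwise_def S_def orthogonal_def
    proof (clarify)
      fix c d assume cE: "c \<in> E" and dE: "d \<in> E" and ne: "phi (ev c) \<noteq> phi (ev d)"
      then have "c \<noteq> d" by auto
      then show "phi (ev c) \<bullet> phi (ev d) = 0"
        unfolding phi_inner using orth ev[OF cE] ev[OF dE] by blast
    qed
    moreover have "0 \<notin> S"
    proof
      assume "0 \<in> S"
      then obtain c where cE: "c \<in> E" and "phi (ev c) = 0" by (auto simp: S_def)
      moreover have "phi 0 = 0" by (simp add: phi_def vec_eq_iff)
      ultimately have "ev c = 0" using phi_inj[of "ev c" 0] by simp
      then show False using ev[OF cE] by blast
    qed
    ultimately have "independent S" by (rule pairwise_orthogonal_independent)
    then have "finite S" using independent_bound by blast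
    moreover have "inj_on (\<lambda>c. phi (ev c)) E"
    proof (rule inj_onI)
      fix c d assume cE: "c \<in> E" and dE: "d \<in> E" and "phi (ev c) = phi (ev d)"
      then have eq: "ev c = ev d" using phi_inj by blast
      obtain x where "(ev c)$x \<noteq> 0" using nonz ev[OF cE] by blast
      moreover have "c * (ev c)$x = d * (ev c)$x"
      proof -
        have "(\<Sum>y\<in>UNIV. A x y * (ev c)$y) = c * (ev c)$x" using ev[OF cE] by blast
        moreover have "(\<Sum>y\<in>UNIV. A x y * (ev d)$y) = d * (ev d)$x" using ev[OF dE] by blast
        ultimately show ?thesis using eq by auto
      qed
      ultimately show "c = d" by simp
    qed
    ultimately show ?thesis unfolding S_def using finite_imageD by blast
  qed
  have em: "eig_mset A = (\<Sum>c\<in>E. replicate_mset (dim (ES c)) c)"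
    by (simp add: eig_mset_def E_def ES_def)
  have cnt: "count (eig_mset A) t = (if t \<in> E then dim (ES t) else 0)" for t
  proof -
    have "count (eig_mset A) t = (\<Sum>c\<in>E. count (replicate_mset (dim (ES c)) c) t)"
      unfolding em by (rule count_sum)
    also have "\<dots> = (\<Sum>c\<in>E. if t = c then dim (ES c) else 0)"
      by (rule sum.cong) (simp_all add: count_replicate_mset)
    also have "\<dots> = (if t \<in> E then dim (ES t) else 0)"
      using finE by (simp add: sum.delta)
    finally show ?thesis .
  qed
  have memE: "t \<in> E" if "t \<in># eig_mset A" for t
  proof -
    have "count (eig_mset A) t \<noteq> 0" using that by simp
    then show ?thesis using cnt[of t] by (simp split: if_splits)
  qed
  define xs where "xs = eig_desc A"
  have mx: "mset xs = eig_mset A" by (simp add: xs_def eig_desc_def)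
  have sx: "sorted (rev xs)" by (simp add: xs_def eig_desc_def)
  have setx: "set xs = set_mset (eig_mset A)" using mx by (metis set_mset_mset)
  have in0: "0 \<in> set xs"
  proof -
    have "count (eig_mset A) 0 \<noteq> 0" using cnt[of 0] zeroE dim0 by simp
    then show ?thesis unfolding setx by (simp del: count_eq_zero_iff add: count_eq_zero_iff[symmetric])
  qed
  have in2: "c2 \<in> set xs"
  proof -
    have "count (eig_mset A) c2 \<noteq> 0" using cnt[of c2] c2E dim2 by (simp del: dim_eq_0)
    then show ?thesis unfolding setx by (simp del: count_eq_zero_iff add: count_eq_zero_iff[symmetric])
  qed
  have c2ne: "c2 \<noteq> 0" using c2g gpos by linarith
  obtain x0 x1 rest where xs3: "xs = x0 # x1 # rest"
  proof (cases xs)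
    case Nil then show ?thesis using in0 by simp
  next
    case (Cons y ys)
    then show ?thesis
    proof (cases ys)
      case Nil then show ?thesis using in0 in2 c2ne Cons by simp
    next
      case (Cons z zs) then show ?thesis using that \<open>xs = y # ys\<close> by blast
    qed
  qed
  have x10: "x1 \<le> x0" using sx xs3 by (simp add: sorted_append)
  have "x1 \<in> set_mset (eig_mset A)" "x0 \<in> set_mset (eig_mset A)" unfolding setx[symmetric] xs3 by simp_all
  then have x1E: "x1 \<in> E" and x0E: "x0 \<in> E" using memE by blast+
  have "x1 \<noteq> 0"
  proof
    assume x1z: "x1 = 0"
    then have "x0 \<ge> 0" using x10 by simp
    then have "x0 = 0" using P1[OF x0E] gpos by linarith
    then have "count (mset xs) 0 \<ge> 2" using xs3 x1z by simp
    then show False using cnt[of 0] zeroE dim0 mx by simp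
  qed
  then have "x1 \<le> -g" using P1[OF x1E] by blast
  moreover have "Gap A = - x1" using xs3 by (simp add: Gap_def xs_def[symmetric])
  ultimately show ?thesis by simp
qed

locale chn =
  fixes \<pi> :: "'a::finite \<Rightarrow> real" and N :: "'a \<Rightarrow> 'a set"
    and p \<alpha> \<nu> :: real and Xs :: "'a set" and T :: "'a \<Rightarrow> 'a"
  assumes pi_pos: "\<forall>x. \<pi> x > 0" and pi_sum: "(\<Sum>x\<in>UNIV. \<pi> x) = 1"
    and p_gt: "p > 1" and alpha_pos: "\<alpha> > 0"
    and N_sym: "\<forall>x y. y \<in> N x \<longleftrightarrow> x \<in> N y" and N_irrefl: "\<forall>x. x \<notin> N x"
    and N_card: "\<forall>x. real (card (N x)) \<le> p powr \<alpha>"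
    and M_ge: "card Xs \<ge> 2"
    and nu_gt: "\<nu> > \<alpha>"
    and cond_i: "\<forall>x\<in>Xs. \<forall>x'\<in>Xs. \<pi> x = \<pi> x'"
    and cond_ii: "\<forall>x. T x \<in> N x"
    and cond_iii: "\<forall>x. x \<notin> Xs \<longrightarrow> \<pi> (T x) \<ge> p powr \<nu> * \<pi> x"
begin

lemma pos: "\<pi> x > 0" using pi_pos by blast
lemma nn: "\<pi> x \<ge> 0" using pos[of x] by simp
lemma pnz: "\<pi> x \<noteq> 0" using pos[of x] by simp

lemma pnu: "p powr \<nu> > 1" using p_gt nu_gt alpha_pos by simp
lemma pa: "p powr \<alpha> > 0" using p_gt by simp

lemma TinvN: "T x = y \<Longrightarrow> x \<in> N y" using cond_ii N_sym by blast

lemma piT: "x \<notin> Xs \<Longrightarrow> \<pi> x \<le> \<pi> (T x) / p powr \<nu>"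
proof -
  assume "x \<notin> Xs"
  then have "p powr \<nu> * \<pi> x \<le> \<pi> (T x)" using cond_iii by blast
  then show ?thesis using pnu p_gt by (simp add: le_divide_eq mult.commute)
qed

lemma piT_less: "x \<notin> Xs \<Longrightarrow> \<pi> x < \<pi> (T x)"
proof -
  assume "x \<notin> Xs"
  then have "\<pi> (T x) \<ge> p powr \<nu> * \<pi> x" using cond_iii by blast
  moreover have "p powr \<nu> * \<pi> x > 1 * \<pi> x" using pnu pos[of x] by (intro mult_strict_right_mono) auto
  ultimately show ?thesis by simp
qed

lemma finXs: "finite Xs" by simp

lemma Xs_ne: "Xs \<noteq> {}" using M_ge by auto

definition c where "c = \<pi> (SOME a. a \<in> Xs)"

lemma c_eq: "x \<in> Xs \<Longrightarrow> \<pi> x = c"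
proof -
  have "(SOME a. a \<in> Xs) \<in> Xs" using Xs_ne by (simp add: some_in_eq)
  moreover assume "x \<in> Xs"
  ultimately show ?thesis unfolding c_def using cond_i by blast
qed

lemma c_pos: "c > 0"
proof -
  obtain a where "a \<in> Xs" using Xs_ne by blast
  then show ?thesis using c_eq pos by metis
qed

lemma cM: "c * real (card Xs) \<le> 1"
proof -
  have "(\<Sum>x\<in>Xs. \<pi> x) = c * real (card Xs)" using c_eq by simp
  moreover have "(\<Sum>x\<in>Xs. \<pi> x) \<le> (\<Sum>x\<in>UNIV. \<pi> x)"
    by (rule sum_mono2) (auto simp: nn)
  ultimately show ?thesis using pi_sum by simp
qed

lemma pi_le_c: "\<pi> y \<le> c"
proof -
  have "Max (range \<pi>) \<in> range \<pi>" by (rule Max_in) auto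
  then obtain z where z: "\<pi> z = Max (range \<pi>)" by (metis rangeE)
  have mx: "\<pi> u \<le> \<pi> z" for u using z by simp
  have "z \<in> Xs"
  proof (rule ccontr)
    assume "z \<notin> Xs"
    then have "\<pi> z < \<pi> (T z)" by (rule piT_less)
    then show False using mx[of "T z"] by simp
  qed
  then show ?thesis using mx[of y] c_eq by simp
qed

lemma preimage:
  assumes G: "\<And>y. G y \<ge> 0"
  shows "(\<Sum>x\<in>S. G (T x)) \<le> p powr \<alpha> * (\<Sum>y\<in>UNIV. G y)"
proof -
  have "(\<Sum>x\<in>S. G (T x)) \<le> (\<Sum>x\<in>UNIV. G (T x))" by (rule sum_mono2) (auto simp: G)
  also have "\<dots> = (\<Sum>x\<in>UNIV. \<Sum>y\<in>UNIV. if T x = y then G y else 0)" by simp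
  also have "\<dots> = (\<Sum>y\<in>UNIV. \<Sum>x\<in>UNIV. if T x = y then G y else 0)" by (rule sum.swap)
  also have "\<dots> = (\<Sum>y\<in>UNIV. real (card {x. T x = y}) * G y)"
  proof (rule sum.cong[OF refl])
    fix y
    have "(\<Sum>x\<in>UNIV. if T x = y then G y else 0) = (\<Sum>x\<in>{x. T x = y}. G y)"
      by (simp add: sum.If_cases)
    then show "(\<Sum>x\<in>UNIV. if T x = y then G y else 0) = real (card {x. T x = y}) * G y" by simp
  qed
  also have "\<dots> \<le> (\<Sum>y\<in>UNIV. p powr \<alpha> * G y)"
  proof (rule sum_mono)
    fix y
    have "{x. T x = y} \<subseteq> N y" using TinvN by blast
    then have "card {x. T x = y} \<le> card (N y)" by (simp add: card_mono)
    then have "real (card {x. T x = y}) \<le> p powr \<alpha>" using N_card by (meson order_trans of_nat_le_iff)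
    then show "real (card {x. T x = y}) * G y \<le> p powr \<alpha> * G y" using G[of y] by (rule mult_right_mono)
  qed
  finally show ?thesis by (simp add: sum_distrib_left)
qed

lemma mass_out: "(\<Sum>x\<in>-Xs. \<pi> x) \<le> p powr (\<alpha> - \<nu>)"
proof -
  have "(\<Sum>x\<in>-Xs. \<pi> x) \<le> (\<Sum>x\<in>-Xs. \<pi> (T x) / p powr \<nu>)" by (rule sum_mono) (simp add: piT)
  also have "\<dots> = (\<Sum>x\<in>-Xs. \<pi> (T x)) / p powr \<nu>" by (simp add: sum_divide_distrib)
  also have "\<dots> \<le> p powr \<alpha> * (\<Sum>y\<in>UNIV. \<pi> y) / p powr \<nu>"
    using pnu by (intro divide_right_mono preimage) (auto simp: nn)
  also have "\<dots> = p powr (\<alpha> - \<nu>)" using pi_sum by (simp add: powr_diff)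
  finally show ?thesis .
qed

lemma sumN_UNIV: "(\<Sum>y\<in>N x. g y) = (\<Sum>y\<in>UNIV. if y \<in> N x then g y else 0)"
  by (simp add: sum.If_cases)

lemma nswap: "(\<Sum>x\<in>UNIV. \<Sum>y\<in>N x. F x y) = (\<Sum>x\<in>UNIV. \<Sum>y\<in>N x. F y x)"
proof -
  have "(\<Sum>x\<in>UNIV. \<Sum>y\<in>N x. F x y) = (\<Sum>x\<in>UNIV. \<Sum>y\<in>UNIV. if y \<in> N x then F x y else 0)"
    by (simp add: sumN_UNIV)
  also have "\<dots> = (\<Sum>y\<in>UNIV. \<Sum>x\<in>UNIV. if y \<in> N x then F x y else 0)" by (rule sum.swap)
  also have "\<dots> = (\<Sum>y\<in>UNIV. \<Sum>x\<in>UNIV. if x \<in> N y then F x y else 0)" using N_sym by (intro sum.cong refl) metis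
  also have "\<dots> = (\<Sum>x\<in>UNIV. \<Sum>y\<in>N x. F y x)" by (simp add: sumN_UNIV)
  finally show ?thesis .
qed

lemma cardN_sum: "(\<Sum>x\<in>UNIV. real (card (N x)) * \<pi> x) \<le> p powr \<alpha>"
proof -
  have "(\<Sum>x\<in>UNIV. real (card (N x)) * \<pi> x) \<le> (\<Sum>x\<in>UNIV. p powr \<alpha> * \<pi> x)"
    by (rule sum_mono) (use N_card nn in \<open>auto intro: mult_right_mono\<close>)
  then show ?thesis using pi_sum by (simp add: sum_distrib_left[symmetric])
qed

lemma S1: "(\<Sum>x\<in>UNIV. \<Sum>y\<in>N x. if x \<notin> Xs then \<pi> x else 0) \<le> p powr (2 * \<alpha> - \<nu>)"
proof -
  have "(\<Sum>x\<in>UNIV. \<Sum>y\<in>N x. if x \<notin> Xs then \<pi> x else 0) = (\<Sum>x\<in>UNIV. if x \<notin> Xs then real (card (N x)) * \<pi> x else 0)"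
    by (rule sum.cong) auto
  also have "\<dots> \<le> (\<Sum>x\<in>UNIV. if x \<notin> Xs then p powr \<alpha> * \<pi> x else 0)"
    by (rule sum_mono) (use N_card nn in \<open>auto intro: mult_right_mono\<close>)
  also have "\<dots> = p powr \<alpha> * (\<Sum>x\<in>-Xs. \<pi> x)"
  proof -
    have e: "{x. x \<notin> Xs} = -Xs" by auto
    show ?thesis by (simp add: sum.If_cases sum_distrib_left e)
  qed
  also have "\<dots> \<le> p powr \<alpha> * p powr (\<alpha> - \<nu>)" using mass_out pa by simp
  also have "\<dots> = p powr (2 * \<alpha> - \<nu>)" by (simp add: powr_add[symmetric])
  finally show ?thesis .
qed

lemma S1': "(\<Sum>x\<in>UNIV. \<Sum>y\<in>N x. if y \<notin> Xs then \<pi> y else 0) \<le> p powr (2 * \<alpha> - \<nu>)"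
  using S1 nswap[of "\<lambda>x y. if x \<notin> Xs then \<pi> x else 0"] by simp

lemma S2: "(\<Sum>x\<in>UNIV. \<Sum>y\<in>N x. if x \<in> Xs \<and> y \<in> Xs then c else 0) \<le> real (card Xs) - 1"
proof -
  have "(\<Sum>x\<in>UNIV. \<Sum>y\<in>N x. if x \<in> Xs \<and> y \<in> Xs then c else 0) \<le> (\<Sum>x\<in>UNIV. if x \<in> Xs then c * (real (card Xs) - 1) else 0)"
  proof (rule sum_mono)
    fix x
    show "(\<Sum>y\<in>N x. if x \<in> Xs \<and> y \<in> Xs then c else 0) \<le> (if x \<in> Xs then c * (real (card Xs) - 1) else 0)"
    proof (cases "x \<in> Xs")
      case True
      have "(\<Sum>y\<in>N x. if x \<in> Xs \<and> y \<in> Xs then c else 0) = (\<Sum>y\<in>N x \<inter> Xs. c)"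
        using True sum.inter_restrict[of "N x" "\<lambda>_. c" Xs] by simp
      also have "\<dots> = c * real (card (N x \<inter> Xs))" by simp
      also have "\<dots> \<le> c * (real (card Xs) - 1)"
      proof -
        have "N x \<inter> Xs \<subseteq> Xs - {x}" using N_irrefl by blast
        then have "card (N x \<inter> Xs) \<le> card (Xs - {x})" by (simp add: card_mono)
        also have "\<dots> = card Xs - 1" using True by simp
        finally have "real (card (N x \<inter> Xs)) \<le> real (card Xs) - 1" using M_ge by linarith
        then show ?thesis using c_pos by simp
      qed
      finally show ?thesis using True by simp
    qed simp
  qed
  also have "\<dots> = real (card Xs) * (c * (real (card Xs) - 1))" by (simp add: sum.If_cases)
  also have "\<dots> = (c * real (card Xs)) * (real (card Xs) - 1)" by simp
  also have "\<dots> \<le> 1 * (real (card Xs) - 1)" using cM M_ge by (intro mult_right_mono) auto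
  finally show ?thesis by simp
qed

lemma S3: assumes K: "K \<ge> 0"
  shows "(\<Sum>x\<in>UNIV. \<Sum>y\<in>N x. if x \<in> Xs then c * K else 0) \<le> p powr \<alpha> * K"
proof -
  have "(\<Sum>x\<in>UNIV. \<Sum>y\<in>N x. if x \<in> Xs then c * K else 0) = (\<Sum>x\<in>UNIV. if x \<in> Xs then real (card (N x)) * (c * K) else 0)"
    by (rule sum.cong) auto
  also have "\<dots> \<le> (\<Sum>x\<in>UNIV. if x \<in> Xs then p powr \<alpha> * (c * K) else 0)"
    by (rule sum_mono) (use N_card c_pos K in \<open>auto intro: mult_right_mono\<close>)
  also have "\<dots> = (c * real (card Xs)) * (p powr \<alpha> * K)" by (simp add: sum.If_cases)
  also have "\<dots> \<le> 1 * (p powr \<alpha> * K)" using cM pa K by (intro mult_right_mono) auto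
  finally show ?thesis by simp
qed

lemma S3': assumes K: "K \<ge> 0"
  shows "(\<Sum>x\<in>UNIV. \<Sum>y\<in>N x. if y \<in> Xs then c * K else 0) \<le> p powr \<alpha> * K"
  using S3[OF K] nswap[of "\<lambda>x y. if x \<in> Xs then c * K else 0"] by simp

lemma expZ: "expect \<pi> (Zh \<pi> N h) = (\<Sum>x\<in>UNIV. \<Sum>y\<in>N x. \<pi> x * h (\<pi> y / \<pi> x))"
  by (simp add: expect_def Zh_def sum_distrib_left)

lemma Z1: "expect \<pi> (Zh \<pi> N (\<lambda>u. 1 + u)) \<le> 2 * p powr \<alpha>"
proof -
  have "expect \<pi> (Zh \<pi> N (\<lambda>u. 1 + u)) = (\<Sum>x\<in>UNIV. \<Sum>y\<in>N x. \<pi> x + \<pi> y)"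
    unfolding expZ by (intro sum.cong refl) (simp add: field_simps pnz)
  also have "\<dots> = (\<Sum>x\<in>UNIV. \<Sum>y\<in>N x. \<pi> x) + (\<Sum>x\<in>UNIV. \<Sum>y\<in>N x. \<pi> y)" by (simp add: sum.distrib)
  also have "(\<Sum>x\<in>UNIV. \<Sum>y\<in>N x. \<pi> y) = (\<Sum>x\<in>UNIV. \<Sum>y\<in>N x. \<pi> x)" by (rule nswap)
  also have "(\<Sum>x\<in>UNIV. \<Sum>y\<in>N x. \<pi> x) = (\<Sum>x\<in>UNIV. real (card (N x)) * \<pi> x)" by simp
  finally show ?thesis using cardN_sum by simp
qed

lemma Z2: "expect \<pi> (Zh \<pi> N (\<lambda>u. min 1 u)) \<le> 2 * p powr (2 * \<alpha> - \<nu>) + (real (card Xs) - 1)"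
proof -
  have mm: "\<pi> x * min 1 (\<pi> y / \<pi> x) = min (\<pi> x) (\<pi> y)" for x y
  proof (cases "\<pi> y \<le> \<pi> x")
    case True
    then have "\<pi> y / \<pi> x \<le> 1" using pos[of x] by simp
    then show ?thesis using True pnz[of x] by (simp add: min_def)
  next
    case False
    then have "\<not> \<pi> y / \<pi> x \<le> 1" using pos[of x] by simp
    then show ?thesis using False by (simp add: min_def)
  qed
  have pw: "min (\<pi> x) (\<pi> y) \<le> (if x \<notin> Xs then \<pi> x else 0) + (if y \<notin> Xs then \<pi> y else 0)
      + (if x \<in> Xs \<and> y \<in> Xs then c else 0)" for x y
  proof (cases "x \<in> Xs"; cases "y \<in> Xs")
    assume "x \<in> Xs" "y \<in> Xs" then show ?thesis using c_eq by simp
  next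
    assume "x \<in> Xs" "y \<notin> Xs" then show ?thesis by simp
  next
    assume "x \<notin> Xs" "y \<in> Xs" then show ?thesis by simp
  next
    assume "x \<notin> Xs" "y \<notin> Xs" then show ?thesis using nn[of x] nn[of y] by simp
  qed
  have "expect \<pi> (Zh \<pi> N (\<lambda>u. min 1 u)) = (\<Sum>x\<in>UNIV. \<Sum>y\<in>N x. min (\<pi> x) (\<pi> y))"
    unfolding expZ by (simp add: mm)
  also have "\<dots> \<le> (\<Sum>x\<in>UNIV. \<Sum>y\<in>N x. (if x \<notin> Xs then \<pi> x else 0) + (if y \<notin> Xs then \<pi> y else 0)
      + (if x \<in> Xs \<and> y \<in> Xs then c else 0))"
    by (intro sum_mono) (rule pw)
  also have "\<dots> = (\<Sum>x\<in>UNIV. \<Sum>y\<in>N x. if x \<notin> Xs then \<pi> x else 0) + (\<Sum>x\<in>UNIV. \<Sum>y\<in>N x. if y \<notin> Xs then \<pi> y else 0)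
      + (\<Sum>x\<in>UNIV. \<Sum>y\<in>N x. if x \<in> Xs \<and> y \<in> Xs then c else 0)"
    by (simp only: sum.distrib)
  also have "\<dots> \<le> 2 * p powr (2 * \<alpha> - \<nu>) + (real (card Xs) - 1)" using S1 S1' S2 by simp
  finally show ?thesis .
qed

lemma Z3: "expect \<pi> (Zh \<pi> N (\<lambda>u. sqrt u)) \<le>
           p powr (2 * \<alpha> - \<nu>) + 2 * p powr (\<alpha> - \<nu> / 2) + (real (card Xs) - 1)"
proof -
  define K where "K = p powr (- \<nu> / 2)"
  have K0: "K \<ge> 0" by (simp add: K_def)
  have Ksq: "K * K = 1 / p powr \<nu>"
  proof -
    have "K * K = p powr (- \<nu> / 2 + - \<nu> / 2)" unfolding K_def by (rule powr_add[symmetric])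
    also have "- \<nu> / 2 + - \<nu> / 2 = - \<nu>" by simp
    also have "p powr (- \<nu>) = 1 / p powr \<nu>" by (simp add: powr_minus divide_inverse)
    finally show ?thesis .
  qed
  have out: "sqrt (\<pi> x * \<pi> y) \<le> c * K" if "x \<in> Xs" "y \<notin> Xs" for x y
  proof -
    have "\<pi> y \<le> \<pi> (T y) / p powr \<nu>" using piT that by blast
    also have "\<dots> \<le> c / p powr \<nu>" using pi_le_c pnu by (intro divide_right_mono) auto
    finally have "c * \<pi> y \<le> c * (c / p powr \<nu>)" using c_pos by (intro mult_left_mono) auto
    then have "\<pi> x * \<pi> y \<le> c * (c / p powr \<nu>)" using that c_eq by simp
    also have "\<dots> = (c * K)^2"
    proof -
      have "(c * K)^2 = c * c * (K * K)" by (simp add: power2_eq_square mult_ac)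
      then show ?thesis using Ksq by simp
    qed
    finally have "sqrt (\<pi> x * \<pi> y) \<le> sqrt ((c * K)^2)" by (rule real_sqrt_le_mono)
    then show ?thesis using c_pos K0 by simp
  qed
  have "expect \<pi> (Zh \<pi> N (\<lambda>u. sqrt u)) = (\<Sum>x\<in>UNIV. \<Sum>y\<in>N x. sqrt (\<pi> x * \<pi> y))"
  proof -
    have "\<pi> x * sqrt (\<pi> y / \<pi> x) = sqrt (\<pi> x * \<pi> y)" for x y
    proof -
      have "\<pi> x = sqrt (\<pi> x) * sqrt (\<pi> x)" using nn[of x] by simp
      then have "\<pi> x * sqrt (\<pi> y / \<pi> x) = sqrt (\<pi> x) * (sqrt (\<pi> x) * sqrt (\<pi> y / \<pi> x))" by (metis mult.assoc)
      also have "\<dots> = sqrt (\<pi> x) * sqrt (\<pi> y)" using pos[of x] by (simp add: real_sqrt_mult[symmetric])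
      finally show ?thesis by (simp add: real_sqrt_mult)
    qed
    then show ?thesis unfolding expZ by simp
  qed
  also have "\<dots> \<le> (\<Sum>x\<in>UNIV. \<Sum>y\<in>N x. ((if x \<notin> Xs then \<pi> x else 0) / 2 + (if y \<notin> Xs then \<pi> y else 0) / 2
      + (if x \<in> Xs then c * K else 0) + (if y \<in> Xs then c * K else 0)) + (if x \<in> Xs \<and> y \<in> Xs then c else 0))"
  proof (intro sum_mono)
    fix x y
    have ck: "c * K \<ge> 0" using c_pos K0 by simp
    show "sqrt (\<pi> x * \<pi> y) \<le> ((if x \<notin> Xs then \<pi> x else 0) / 2 + (if y \<notin> Xs then \<pi> y else 0) / 2
      + (if x \<in> Xs then c * K else 0) + (if y \<in> Xs then c * K else 0)) + (if x \<in> Xs \<and> y \<in> Xs then c else 0)"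
    proof (cases "x \<in> Xs"; cases "y \<in> Xs")
      assume "x \<in> Xs" "y \<in> Xs" then show ?thesis using c_eq ck c_pos by (simp add: mult.commute)
    next
      assume "x \<in> Xs" "y \<notin> Xs" then show ?thesis using out[of x y] nn[of y] by simp
    next
      assume "x \<notin> Xs" "y \<in> Xs" then show ?thesis using out[of y x] nn[of x] by (simp add: mult.commute)
    next
      assume "x \<notin> Xs" "y \<notin> Xs"
      moreover have "sqrt (\<pi> x * \<pi> y) \<le> (\<pi> x + \<pi> y) / 2" using nn[of x] nn[of y] by (rule arith_geo_mean_sqrt)
      ultimately show ?thesis by simp
    qed
  qed
  also have "\<dots> = (\<Sum>x\<in>UNIV. \<Sum>y\<in>N x. if x \<notin> Xs then \<pi> x else 0) / 2 + (\<Sum>x\<in>UNIV. \<Sum>y\<in>N x. if y \<notin> Xs then \<pi> y else 0) / 2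
      + (\<Sum>x\<in>UNIV. \<Sum>y\<in>N x. if x \<in> Xs then c * K else 0) + (\<Sum>x\<in>UNIV. \<Sum>y\<in>N x. if y \<in> Xs then c * K else 0)
      + (\<Sum>x\<in>UNIV. \<Sum>y\<in>N x. if x \<in> Xs \<and> y \<in> Xs then c else 0)"
    by (simp only: sum.distrib sum_divide_distrib)
  also have "\<dots> \<le> p powr (2 * \<alpha> - \<nu>) / 2 + p powr (2 * \<alpha> - \<nu>) / 2 + p powr \<alpha> * K + p powr \<alpha> * K + (real (card Xs) - 1)"
    using S1 S1' S3[OF K0] S3'[OF K0] S2 by linarith
  also have "p powr \<alpha> * K = p powr (\<alpha> - \<nu> / 2)"
  proof -
    have "p powr \<alpha> * K = p powr (\<alpha> + - \<nu> / 2)" unfolding K_def by (rule powr_add[symmetric])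
    then show ?thesis by simp
  qed
  finally show ?thesis by simp
qed

end

locale chnh = chn \<pi> N p \<alpha> \<nu> Xs T
  for \<pi> :: "'a::finite \<Rightarrow> real" and N p \<alpha> \<nu> Xs T +
  fixes h :: "real \<Rightarrow> real"
  assumes N_irr: "\<forall>K. stochastic K \<and> (\<forall>x y. K x y > 0 \<longleftrightarrow> y \<in> N x) \<longrightarrow> irreducible K"
    and bal: "balancing h"
    and irrX: "irreducible_on Xs (restrict_kernel (Kh \<pi> N h) Xs)"
begin

lemma hpos: "u > 0 \<Longrightarrow> h u > 0" using bal unfolding balancing_def by blast
lemma hmono: "0 < u \<Longrightarrow> u \<le> v \<Longrightarrow> h u \<le> h v"
proof -
  assume "0 < u" "u \<le> v"
  moreover have "mono_on {0<..} h" using bal unfolding balancing_def by blast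
  ultimately show ?thesis by (auto intro: mono_onD)
qed
lemma hbal: "u > 0 \<Longrightarrow> h u = u * h (1 / u)" using bal unfolding balancing_def by blast

lemma wsym: "\<pi> x * h (\<pi> y / \<pi> x) = \<pi> y * h (\<pi> x / \<pi> y)"
proof -
  have "h (\<pi> y / \<pi> x) = (\<pi> y / \<pi> x) * h (1 / (\<pi> y / \<pi> x))" using pos[of x] pos[of y] by (intro hbal) simp
  then show ?thesis using pnz[of x] pnz[of y] by simp
qed

definition Z where "Z = Zh \<pi> N h"
definition EZ where "EZ = expect \<pi> Z"
definition wgt where "wgt x y = (if y \<in> N x then \<pi> x * h (\<pi> y / \<pi> x) else 0)"

lemma wgt_sym: "wgt x y = wgt y x"
proof -
  have "y \<in> N x \<longleftrightarrow> x \<in> N y" using N_sym by blast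
  then show ?thesis unfolding wgt_def using wsym[of x y] by simp
qed

lemma wgt_nn: "wgt x y \<ge> 0"
  unfolding wgt_def using pos[of x] pos[of y] hpos[of "\<pi> y / \<pi> x"] by auto

lemma wgt_diag: "wgt x x = 0" unfolding wgt_def using N_irrefl by simp

lemma Zpos: "Z x > 0"
proof -
  have "Z x = (\<Sum>y\<in>N x. h (\<pi> y / \<pi> x))" by (simp add: Z_def Zh_def)
  moreover have "N x \<noteq> {}" using cond_ii by blast
  moreover have "\<forall>y\<in>N x. h (\<pi> y / \<pi> x) > 0" using pos by (auto intro: hpos)
  ultimately show ?thesis by (simp add: sum_pos)
qed

lemma EZpos: "EZ > 0"
proof -
  have "EZ = (\<Sum>x\<in>UNIV. \<pi> x * Z x)" by (simp add: EZ_def expect_def)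
  moreover have "(\<Sum>x\<in>UNIV. \<pi> x * Z x) > 0" by (rule sum_pos) (auto simp: pos Zpos)
  ultimately show ?thesis by simp
qed

lemma Kh_eq: "Kh \<pi> N h x y = (if y \<in> N x then h (\<pi> y / \<pi> x) / Z x else 0)"
  by (simp add: Kh_def Z_def)

lemma Kh_pos_iff: "Kh \<pi> N h x y > 0 \<longleftrightarrow> y \<in> N x"
  using Zpos[of x] hpos[of "\<pi> y / \<pi> x"] pos[of x] pos[of y] by (auto simp: Kh_eq)

lemma Kh_nn: "Kh \<pi> N h x y \<ge> 0"
  using Kh_pos_iff[of x y] by (auto simp: Kh_eq)

lemma Kh_row: "(\<Sum>y\<in>UNIV. Kh \<pi> N h x y) = 1"
proof -
  have "(\<Sum>y\<in>UNIV. Kh \<pi> N h x y) = (\<Sum>y\<in>N x. h (\<pi> y / \<pi> x) / Z x)"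
    by (simp add: Kh_eq sumN_UNIV)
  also have "\<dots> = Z x / Z x" by (simp add: sum_divide_distrib[symmetric] Z_def Zh_def)
  finally show ?thesis using Zpos[of x] by simp
qed

lemma Kh_irr: "irreducible (Kh \<pi> N h)"
proof -
  have "stochastic (Kh \<pi> N h)" unfolding stochastic_def using Kh_nn Kh_row by blast
  then show ?thesis using Kh_pos_iff by (intro N_irr[rule_format]) blast
qed

definition pih where "pih x = \<pi> x * Z x / EZ"

lemma pih_pos: "pih x > 0" using pos[of x] Zpos[of x] EZpos by (simp add: pih_def)

lemma DB: "pih x * Kh \<pi> N h x y = wgt x y / EZ"
  using Zpos[of x] by (simp add: pih_def Kh_eq wgt_def)

lemma stat: "stationary_dist (Kh \<pi> N h) = pih"
  unfolding stationary_dist_def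
proof (rule the_equality)
  let ?K = "Kh \<pi> N h"
  show "(\<forall>x. 0 \<le> pih x) \<and> (\<Sum>x\<in>UNIV. pih x) = 1 \<and> (\<forall>y. (\<Sum>x\<in>UNIV. pih x * ?K x y) = pih y)"
  proof (intro conjI allI)
    fix x show "0 \<le> pih x" using pih_pos[of x] by simp
  next
    show "(\<Sum>x\<in>UNIV. pih x) = 1"
      using EZpos by (simp add: pih_def sum_divide_distrib[symmetric] EZ_def expect_def)
  next
    fix y
    have "(\<Sum>x\<in>UNIV. pih x * ?K x y) = (\<Sum>x\<in>UNIV. wgt y x) / EZ"
      by (simp add: DB wgt_sym[of _ y] sum_divide_distrib)
    also have "(\<Sum>x\<in>UNIV. wgt y x) = \<pi> y * Z y"
      by (simp add: wgt_def sumN_UNIV[symmetric] Z_def Zh_def sum_distrib_left)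
    finally show "(\<Sum>x\<in>UNIV. pih x * ?K x y) = pih y" by (simp add: pih_def)
  qed
next
  let ?K = "Kh \<pi> N h"
  fix \<mu> assume mu: "(\<forall>x. 0 \<le> \<mu> x) \<and> (\<Sum>x\<in>UNIV. \<mu> x) = 1 \<and> (\<forall>y. (\<Sum>x\<in>UNIV. \<mu> x * ?K x y) = \<mu> y)"
  define gg where "gg x = \<mu> x / pih x" for x
  have mug: "\<mu> x = gg x * pih x" for x using pih_pos[of x] by (simp add: gg_def)
  have harm: "gg y = (\<Sum>x\<in>UNIV. ?K y x * gg x)" for y
  proof -
    have "\<mu> y = (\<Sum>x\<in>UNIV. \<mu> x * ?K x y)" using mu by simp
    also have "\<dots> = (\<Sum>x\<in>UNIV. gg x * (pih x * ?K x y))" by (simp add: mug mult_ac)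
    also have "\<dots> = (\<Sum>x\<in>UNIV. gg x * (pih y * ?K y x))" by (simp add: DB wgt_sym[of _ y])
    also have "\<dots> = pih y * (\<Sum>x\<in>UNIV. ?K y x * gg x)" by (simp add: sum_distrib_left mult_ac)
    finally show ?thesis using pih_pos[of y] by (simp add: mug)
  qed
  define mx where "mx = Max (range gg)"
  have gmx: "gg x \<le> mx" for x unfolding mx_def by simp
  have "mx \<in> range gg" unfolding mx_def by (rule Max_in) auto
  then obtain y0 where y0: "gg y0 = mx" by (metis rangeE)
  have clos: "gg x = mx" if "gg y = mx" "?K y x > 0" for x y
  proof -
    have "(\<Sum>z\<in>UNIV. ?K y z * (mx - gg z)) = mx * (\<Sum>z\<in>UNIV. ?K y z) - (\<Sum>z\<in>UNIV. ?K y z * gg z)"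
      by (simp add: algebra_simps sum_subtractf sum_distrib_left)
    also have "\<dots> = 0" using Kh_row[of y] harm[of y] that(1) by simp
    finally have "\<forall>z\<in>UNIV. ?K y z * (mx - gg z) = 0"
      by (subst sum_nonneg_eq_0_iff[symmetric]) (auto intro!: mult_nonneg_nonneg Kh_nn simp: gmx)
    then have "?K y x * (mx - gg x) = 0" by blast
    then show ?thesis using that(2) by simp
  qed
  have allmx: "gg x = mx" for x
  proof -
    have "(y0, x) \<in> {(a, b). a \<in> UNIV \<and> b \<in> UNIV \<and> ?K a b > 0}\<^sup>*"
      using Kh_irr unfolding irreducible_def irreducible_on_def by blast
    then show ?thesis
    proof (induction rule: rtrancl_induct)
      case base then show ?case by (rule y0)
    next
      case (step y z) then show ?case using clos by blast
    qed
  qed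
  have "(\<Sum>x\<in>UNIV. pih x) = 1"
    using EZpos by (simp add: pih_def sum_divide_distrib[symmetric] EZ_def expect_def)
  then have "(\<Sum>x\<in>UNIV. \<mu> x) = mx" by (simp add: mug allmx sum_distrib_left[symmetric])
  then have "mx = 1" using mu by simp
  then show "\<mu> = pih" by (simp add: fun_eq_iff mug allmx)
qed

definition qq where "qq x y = (if y \<in> N x then h (\<pi> y / \<pi> x) / EZ else 0)"

lemma Q_off: "x \<noteq> y \<Longrightarrow> Qh \<pi> N h x y = qq x y"
  using Zpos[of x] pos[of x] EZpos by (simp add: Qh_def stat Kh_eq pih_def qq_def)

lemma Q_diag: "Qh \<pi> N h x x = - (\<Sum>x'\<in>UNIV - {x}. qq x x')"
proof -
  have "Qh \<pi> N h x x = - (\<Sum>x'\<in>UNIV - {x}. Kh \<pi> N h x x' / (\<pi> x / stationary_dist (Kh \<pi> N h) x))"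
    by (simp add: Qh_def Let_def)
  also have "\<dots> = - (\<Sum>x'\<in>UNIV - {x}. qq x x')"
    using Zpos[of x] pos[of x] EZpos by (intro arg_cong[where f=uminus] sum.cong refl) (simp add: stat Kh_eq pih_def qq_def)
  finally show ?thesis .
qed

lemma Q_rows: "(\<Sum>y\<in>UNIV. Qh \<pi> N h x y) = 0"
proof -
  have "(\<Sum>y\<in>UNIV. Qh \<pi> N h x y) = Qh \<pi> N h x x + (\<Sum>y\<in>UNIV - {x}. Qh \<pi> N h x y)"
    by (simp add: sum.remove)
  also have "(\<Sum>y\<in>UNIV - {x}. Qh \<pi> N h x y) = (\<Sum>y\<in>UNIV - {x}. qq x y)"
    by (rule sum.cong) (auto simp: Q_off)
  finally show ?thesis by (simp add: Q_diag)
qed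

lemma piQ: "x \<noteq> y \<Longrightarrow> \<pi> x * Qh \<pi> N h x y = wgt x y / EZ"
  using pnz[of x] by (simp add: Q_off qq_def wgt_def)

lemma Q_sym: "\<pi> x * Qh \<pi> N h x y = \<pi> y * Qh \<pi> N h y x"
  by (cases "x = y") (simp_all add: piQ wgt_sym)

lemma dirichlet: "\<pi> x * Qh \<pi> N h x y * (f x - f y)^2 = wgt x y * (f x - f y)^2 / EZ"
  by (cases "x = y") (simp_all add: piQ)

end

lemma sq_split:
  fixes a b r :: real
  assumes "0 < r" "r < 1"
  shows "(a + b)^2 \<le> a^2 / (1 - r) + b^2 / r"
proof -
  have id: "r * a^2 + (1 - r) * b^2 - r * (1 - r) * (a + b)^2 = (r * a - (1 - r) * b)^2"
    by (simp add: algebra_simps power2_eq_square)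
  have "r * (1 - r) * (a + b)^2 \<le> r * a^2 + (1 - r) * b^2"
    using id by (smt (verit) zero_le_power2)
  moreover have "a^2 / (1 - r) + b^2 / r = (r * a^2 + (1 - r) * b^2) / (r * (1 - r))"
    using assms by (simp add: field_simps)
  moreover have "r * (1 - r) > 0" using assms by simp
  ultimately show ?thesis by (simp add: le_divide_eq mult.commute)
qed

lemma sq_path:
  fixes a b S k :: real
  assumes "b^2 \<le> k * S" "S \<ge> 0" "k \<ge> 0"
  shows "(a + b)^2 \<le> (k + 1) * (a^2 + S)"
proof (cases "k = 0")
  case True
  then have "b = 0" using assms(1) by simp
  then show ?thesis using True assms(2) by simp
next
  case False
  then have kp: "k > 0" using assms(3) by simp
  have "k * (a + b)^2 \<le> k * (k + 1) * a^2 + (k + 1) * b^2"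
  proof -
    have "k * (k + 1) * a^2 + (k + 1) * b^2 - k * (a + b)^2 = (k * a - b)^2"
      by (simp add: algebra_simps power2_eq_square)
    then show ?thesis by (smt (verit) zero_le_power2)
  qed
  also have "\<dots> \<le> k * (k + 1) * a^2 + (k + 1) * (k * S)"
    using assms(1) assms(3) by (intro add_left_mono mult_left_mono) auto
  also have "\<dots> = k * ((k + 1) * (a^2 + S))" by (simp add: algebra_simps)
  finally show ?thesis using kp by simp
qed

fun pedges :: "'b \<Rightarrow> 'b list \<Rightarrow> ('b \<times> 'b) set" where
  "pedges x [] = {}"
| "pedges x (y # ys) = insert (x, y) (pedges y ys)"

lemma pedges_fst: "e \<in> pedges x ys \<Longrightarrow> fst e \<in> set (x # ys)"
  by (induction ys arbitrary: x) auto

lemma pedges_fin: "finite (pedges x ys)"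
  by (induction ys arbitrary: x) auto

context chnh
begin

definition D where "D f = (\<Sum>x\<in>-Xs. \<pi> x * (f x - f (T x))^2)"
definition SX :: "('a \<Rightarrow> real) \<Rightarrow> real" where "SX f = (\<Sum>x\<in>UNIV. \<Sum>y\<in>UNIV. if x \<in> Xs \<and> y \<in> Xs \<and> y \<in> N x then (f x - f y)^2 else 0)"
definition r where "r = p powr ((\<alpha> - \<nu>) / 2)"

lemma r_pos: "r > 0" using p_gt by (simp add: r_def)
lemma r_lt1: "r < 1" unfolding r_def using p_gt nu_gt by (intro powr_less_one) auto
lemma r_sq: "r * r = p powr \<alpha> / p powr \<nu>"
proof -
  have "r * r = p powr ((\<alpha> - \<nu>) / 2 + (\<alpha> - \<nu>) / 2)" unfolding r_def by (rule powr_add[symmetric])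
  also have "(\<alpha> - \<nu>) / 2 + (\<alpha> - \<nu>) / 2 = \<alpha> - \<nu>" by simp
  finally show ?thesis by (simp add: powr_diff)
qed

lemma D_nn: "D f \<ge> 0" unfolding D_def by (rule sum_nonneg) (simp add: nn)
lemma SX_nn: "SX f \<ge> 0" unfolding SX_def by (auto intro!: sum_nonneg)

lemma sum_split: "(\<Sum>x\<in>UNIV. g x) = (\<Sum>x\<in>Xs. g x) + (\<Sum>x\<in>-Xs. g x)"
proof -
  have "(\<Sum>x\<in>UNIV. g x) = (\<Sum>x\<in>UNIV - Xs. g x) + (\<Sum>x\<in>Xs. g x)" by (rule sum.subset_diff) auto
  then show ?thesis by (simp add: Compl_eq_Diff_UNIV add.commute)
qed

lemma P_total:
  "(\<Sum>x\<in>UNIV. \<pi> x * (f x - m)^2) \<le> c * (\<Sum>z\<in>Xs. (f z - m)^2) / (1 - r) + D f / (1 - r)^2"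
proof -
  define G where "G x = (f x - m)^2" for x
  define T0 where "T0 = (\<Sum>x\<in>UNIV. \<pi> x * G x)"
  have G0: "G x \<ge> 0" for x by (simp add: G_def)
  have inX: "(\<Sum>x\<in>Xs. \<pi> x * G x) = c * (\<Sum>z\<in>Xs. G z)"
    by (simp add: c_eq sum_distrib_left)
  have pw: "\<pi> x * G x \<le> \<pi> x * (f x - f (T x))^2 / (1 - r) + \<pi> x * G (T x) / r" for x
  proof -
    have "G x = ((f x - f (T x)) + (f (T x) - m))^2" by (simp add: G_def)
    also have "\<dots> \<le> (f x - f (T x))^2 / (1 - r) + (f (T x) - m)^2 / r"
      by (rule sq_split[OF r_pos r_lt1])
    finally have "\<pi> x * G x \<le> \<pi> x * ((f x - f (T x))^2 / (1 - r) + G (T x) / r)"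
      by (intro mult_left_mono) (auto simp: G_def nn)
    then show ?thesis by (simp add: algebra_simps)
  qed
  have out1: "(\<Sum>x\<in>-Xs. \<pi> x * G x) \<le> D f / (1 - r) + (\<Sum>x\<in>-Xs. \<pi> x * G (T x)) / r"
  proof -
    have "(\<Sum>x\<in>-Xs. \<pi> x * G x) \<le> (\<Sum>x\<in>-Xs. \<pi> x * (f x - f (T x))^2 / (1 - r) + \<pi> x * G (T x) / r)"
      by (rule sum_mono) (rule pw)
    also have "\<dots> = D f / (1 - r) + (\<Sum>x\<in>-Xs. \<pi> x * G (T x)) / r"
      by (simp add: D_def sum.distrib sum_divide_distrib)
    finally show ?thesis .
  qed
  have out2: "(\<Sum>x\<in>-Xs. \<pi> x * G (T x)) \<le> r * r * T0"
  proof -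
    have "(\<Sum>x\<in>-Xs. \<pi> x * G (T x)) \<le> (\<Sum>x\<in>-Xs. \<pi> (T x) * G (T x) / p powr \<nu>)"
    proof (rule sum_mono)
      fix x assume "x \<in> -Xs"
      then have "\<pi> x \<le> \<pi> (T x) / p powr \<nu>" using piT by simp
      then have "\<pi> x * G (T x) \<le> \<pi> (T x) / p powr \<nu> * G (T x)" using G0 by (rule mult_right_mono)
      then show "\<pi> x * G (T x) \<le> \<pi> (T x) * G (T x) / p powr \<nu>" by simp
    qed
    also have "\<dots> = (\<Sum>x\<in>-Xs. \<pi> (T x) * G (T x)) / p powr \<nu>" by (simp add: sum_divide_distrib)
    also have "\<dots> \<le> p powr \<alpha> * (\<Sum>y\<in>UNIV. \<pi> y * G y) / p powr \<nu>"
      using pnu by (intro divide_right_mono preimage[of "\<lambda>y. \<pi> y * G y"]) (auto simp: nn G0)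
    also have "\<dots> = r * r * T0" by (simp add: r_sq T0_def)
    finally show ?thesis .
  qed
  have "T0 = c * (\<Sum>z\<in>Xs. G z) + (\<Sum>x\<in>-Xs. \<pi> x * G x)" unfolding T0_def by (simp add: sum_split inX)
  also have "\<dots> \<le> c * (\<Sum>z\<in>Xs. G z) + D f / (1 - r) + r * T0"
  proof -
    have "(\<Sum>x\<in>-Xs. \<pi> x * G (T x)) / r \<le> r * r * T0 / r" using out2 r_pos by (intro divide_right_mono) auto
    then have "(\<Sum>x\<in>-Xs. \<pi> x * G (T x)) / r \<le> r * T0" using r_pos by simp
    then show ?thesis using out1 by simp
  qed
  finally have "(1 - r) * T0 \<le> c * (\<Sum>z\<in>Xs. G z) + D f / (1 - r)" by (simp add: algebra_simps)
  then have "T0 \<le> (c * (\<Sum>z\<in>Xs. G z) + D f / (1 - r)) / (1 - r)"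
    using r_lt1 by (simp add: le_divide_eq mult.commute)
  also have "\<dots> = c * (\<Sum>z\<in>Xs. G z) / (1 - r) + D f / (1 - r)^2"
    by (simp add: add_divide_distrib power2_eq_square divide_divide_eq_left)
  finally show ?thesis by (simp add: T0_def G_def)
qed

lemma P_energy:
  "(\<Sum>x\<in>UNIV. \<Sum>y\<in>UNIV. wgt x y * (f x - f y)^2) \<ge> h 1 * (2 * D f + c * SX f)"
proof -
  define h1 where "h1 = h 1"
  have h1p: "h1 > 0" unfolding h1_def by (rule hpos) simp
  define F1 where "F1 x y = (if x \<notin> Xs then (if y = T x then h1 * \<pi> x * (f x - f y)^2 else 0) else 0)" for x y
  define F2 where "F2 x y = (if y \<notin> Xs then (if x = T y then h1 * \<pi> y * (f x - f y)^2 else 0) else 0)" for x y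
  define F3 where "F3 x y = c * h1 * (if x \<in> Xs \<and> y \<in> Xs \<and> y \<in> N x then (f x - f y)^2 else 0)" for x y
  have excl: "\<not> (x \<notin> Xs \<and> y = T x \<and> y \<notin> Xs \<and> x = T y)" for x y
  proof
    assume a: "x \<notin> Xs \<and> y = T x \<and> y \<notin> Xs \<and> x = T y"
    have nx: "x \<notin> Xs" and yx: "T x = y" and ny: "y \<notin> Xs" and xy: "T y = x" using a by (blast, metis, blast, metis)
    have "\<pi> x < \<pi> (T x)" by (rule piT_less[OF nx])
    then have l1: "\<pi> x < \<pi> y" unfolding yx .
    have "\<pi> y < \<pi> (T y)" by (rule piT_less[OF ny])
    then have l2: "\<pi> y < \<pi> x" unfolding xy .
    from l1 l2 show False by simp
  qed
  have pw: "F1 x y + F2 x y + F3 x y \<le> wgt x y * (f x - f y)^2" for x y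
  proof -
    have sq0: "(f x - f y)^2 \<ge> 0" by simp
    show ?thesis
    proof (cases "x \<notin> Xs \<and> y = T x")
      case True
      have "\<not> (y \<notin> Xs \<and> x = T y)" using excl[of x y] True by blast
      then have "F2 x y = 0" unfolding F2_def by auto
      moreover have "F3 x y = 0" using True by (simp add: F3_def)
      moreover have "h1 * \<pi> x \<le> wgt x y"
      proof -
        have "\<pi> (T x) \<ge> \<pi> x" using piT_less[of x] True by simp
        then have "1 \<le> \<pi> y / \<pi> x" using True pos[of x] by simp
        then have "h1 \<le> h (\<pi> y / \<pi> x)" unfolding h1_def by (intro hmono) auto
        moreover have "y \<in> N x" using True cond_ii by blast
        ultimately show ?thesis using pos[of x] by (simp add: wgt_def mult.commute)
      qed
      ultimately show ?thesis using True sq0 by (simp add: F1_def mult_right_mono)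
    next
      case nF1: False
      then have F1z: "F1 x y = 0" by (auto simp: F1_def)
      show ?thesis
      proof (cases "y \<notin> Xs \<and> x = T y")
        case True
        then have "F3 x y = 0" by (simp add: F3_def)
        moreover have "h1 * \<pi> y \<le> wgt x y"
        proof -
          have "\<pi> (T y) \<ge> \<pi> y" using piT_less[of y] True by simp
          then have "1 \<le> \<pi> x / \<pi> y" using True pos[of y] by simp
          then have "h1 \<le> h (\<pi> x / \<pi> y)" unfolding h1_def by (intro hmono) auto
          moreover have "x \<in> N y" using True cond_ii by blast
          ultimately show ?thesis using pos[of y] wgt_sym[of x y] by (simp add: wgt_def mult.commute)
        qed
        ultimately show ?thesis using True sq0 F1z by (simp add: F2_def mult_right_mono)
      next
        case False
        then have F2z: "F2 x y = 0" by (auto simp: F2_def)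
        show ?thesis
        proof (cases "x \<in> Xs \<and> y \<in> Xs \<and> y \<in> N x")
          case True
          then have "wgt x y = c * h1" using c_eq pos by (simp add: wgt_def h1_def)
          then show ?thesis using True F1z F2z by (simp add: F3_def)
        next
          case False
          then have "F3 x y = 0" unfolding F3_def by auto
          then show ?thesis using F1z F2z wgt_nn[of x y] by simp
        qed
      qed
    qed
  qed
  have inter: "(\<Sum>x\<in>UNIV. if x \<notin> Xs then g x else 0) = (\<Sum>x\<in>-Xs. g x)" for g :: "'a \<Rightarrow> real"
    using sum.inter_restrict[of UNIV g "-Xs"] by simp
  have s1: "(\<Sum>x\<in>UNIV. \<Sum>y\<in>UNIV. F1 x y) = h1 * D f"
  proof -
    have "(\<Sum>x\<in>UNIV. \<Sum>y\<in>UNIV. F1 x y) = (\<Sum>x\<in>UNIV. if x \<notin> Xs then h1 * (\<pi> x * (f x - f (T x))^2) else 0)"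
      by (intro sum.cong refl) (simp add: F1_def)
    then show ?thesis by (simp add: inter D_def sum_distrib_left)
  qed
  have s2: "(\<Sum>x\<in>UNIV. \<Sum>y\<in>UNIV. F2 x y) = h1 * D f"
  proof -
    have "(\<Sum>x\<in>UNIV. \<Sum>y\<in>UNIV. F2 x y) = (\<Sum>y\<in>UNIV. \<Sum>x\<in>UNIV. F2 x y)" by (rule sum.swap)
    also have "\<dots> = (\<Sum>y\<in>UNIV. if y \<notin> Xs then h1 * (\<pi> y * (f y - f (T y))^2) else 0)"
      by (intro sum.cong refl) (simp add: F2_def power2_commute)
    finally show ?thesis by (simp add: inter D_def sum_distrib_left)
  qed
  have s3: "(\<Sum>x\<in>UNIV. \<Sum>y\<in>UNIV. F3 x y) = c * h1 * SX f"
    by (simp add: F3_def SX_def sum_distrib_left)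
  have "h1 * (2 * D f + c * SX f) = (\<Sum>x\<in>UNIV. \<Sum>y\<in>UNIV. F1 x y + F2 x y + F3 x y)"
    by (simp add: sum.distrib s1 s2 s3 algebra_simps)
  also have "\<dots> \<le> (\<Sum>x\<in>UNIV. \<Sum>y\<in>UNIV. wgt x y * (f x - f y)^2)"
    by (intro sum_mono) (rule pw)
  finally show ?thesis by (simp add: h1_def)
qed

end

context chnh
begin

definition Rel where "Rel = {(a, b). a \<in> Xs \<and> b \<in> Xs \<and> restrict_kernel (Kh \<pi> N h) Xs a b > 0}"
definition rp where "rp u v = ((u, v) \<in> Rel)"
definition ES where "ES = {(u, v). u \<in> Xs \<and> v \<in> Xs \<and> v \<in> N u}"
definition egf :: "('a \<Rightarrow> real) \<Rightarrow> 'a \<times> 'a \<Rightarrow> real" where "egf f e = (f (fst e) - f (snd e))^2"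

lemma rp_edge: "rp x y \<Longrightarrow> x \<noteq> y \<Longrightarrow> (x, y) \<in> ES"
  using Kh_pos_iff[of x y] by (auto simp: rp_def Rel_def ES_def restrict_kernel_def)

lemma path_in: "rtrancl_path rp x ys z \<Longrightarrow> set ys \<subseteq> Xs"
  by (induction rule: rtrancl_path.induct) (auto simp: rp_def Rel_def)

lemma path_ineq: "rtrancl_path rp x ys z \<Longrightarrow> distinct (x # ys) \<Longrightarrow>
   (f x - f z)^2 \<le> real (length ys) * (\<Sum>e\<in>pedges x ys. egf f e) \<and> pedges x ys \<subseteq> ES"
proof (induction rule: rtrancl_path.induct)
  case (base x)
  then show ?case by simp
next
  case (step x y ys z)
  have d: "distinct (y # ys)" using step.prems by simp
  have xn: "x \<notin> set (y # ys)" using step.prems by simp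
  from step.IH[OF d] have IH1: "(f y - f z)^2 \<le> real (length ys) * (\<Sum>e\<in>pedges y ys. egf f e)"
    and IH2: "pedges y ys \<subseteq> ES" by auto
  have nin: "(x, y) \<notin> pedges y ys" using pedges_fst[of "(x, y)" y ys] xn by auto
  have xy: "x \<noteq> y" using xn by simp
  have S0: "(\<Sum>e\<in>pedges y ys. egf f e) \<ge> 0" by (rule sum_nonneg) (simp add: egf_def)
  have "(f x - f z)^2 = ((f x - f y) + (f y - f z))^2" by simp
  also have "\<dots> \<le> (real (length ys) + 1) * ((f x - f y)^2 + (\<Sum>e\<in>pedges y ys. egf f e))"
    by (rule sq_path[OF IH1 S0]) simp
  also have "\<dots> = real (length (y # ys)) * (\<Sum>e\<in>pedges x (y # ys). egf f e)"
    using nin pedges_fin[of y ys] by (simp add: egf_def)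
  finally show ?case using IH2 rp_edge[OF step.hyps(1) xy] by simp
qed

lemma ES_sum: "(\<Sum>e\<in>ES. egf f e) = SX f"
proof -
  have "(\<Sum>e\<in>ES. egf f e) = (\<Sum>e\<in>UNIV. if e \<in> ES then egf f e else 0)"
    using sum.inter_restrict[of UNIV "egf f" ES] by simp
  also have "\<dots> = (\<Sum>(x, y)\<in>UNIV \<times> UNIV. if (x, y) \<in> ES then egf f (x, y) else 0)"
    by (intro sum.cong) (auto split: prod.splits)
  also have "\<dots> = (\<Sum>x\<in>UNIV. \<Sum>y\<in>UNIV. if (x, y) \<in> ES then egf f (x, y) else 0)"
    by (rule sum.cartesian_product[symmetric])
  also have "\<dots> = SX f" unfolding SX_def ES_def egf_def fst_conv snd_conv by simp
  finally show ?thesis .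
qed

lemma pair_bound:
  assumes a: "a \<in> Xs" and b: "b \<in> Xs"
  shows "(f a - f b)^2 \<le> (real (card Xs) - 1) * SX f"
proof -
  have "(a, b) \<in> Rel\<^sup>*" using irrX a b unfolding irreducible_on_def Rel_def by blast
  moreover have "{(x, y). rp x y} = Rel" by (auto simp: rp_def)
  ultimately have "rp\<^sup>*\<^sup>* a b" by (simp add: rtranclp_rtrancl_eq)
  then obtain ys where "rtrancl_path rp a ys b" by (auto simp: rtranclp_eq_rtrancl_path)
  then obtain ys' where p: "rtrancl_path rp a ys' b" and dist: "distinct (a # ys')"
    by (rule rtrancl_path_distinct)
  from path_ineq[OF p dist] have i1: "(f a - f b)^2 \<le> real (length ys') * (\<Sum>e\<in>pedges a ys'. egf f e)"
    and i2: "pedges a ys' \<subseteq> ES" by auto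
  have "(\<Sum>e\<in>pedges a ys'. egf f e) \<le> (\<Sum>e\<in>ES. egf f e)"
    by (rule sum_mono2) (use i2 in \<open>auto simp: egf_def\<close>)
  then have s: "(\<Sum>e\<in>pedges a ys'. egf f e) \<le> SX f" by (simp add: ES_sum)
  have "set (a # ys') \<subseteq> Xs" using path_in[OF p] a by simp
  then have "card (set (a # ys')) \<le> card Xs" by (simp add: card_mono)
  then have "length (a # ys') \<le> card Xs" using distinct_card[OF dist] by simp
  then have len: "real (length ys') \<le> real (card Xs) - 1" by simp
  have S0: "(\<Sum>e\<in>pedges a ys'. egf f e) \<ge> 0" by (rule sum_nonneg) (simp add: egf_def)
  have "real (length ys') * (\<Sum>e\<in>pedges a ys'. egf f e) \<le> (real (card Xs) - 1) * SX f"
    by (rule mult_mono[OF len s]) (use M_ge S0 in auto)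
  then show ?thesis using i1 by simp
qed

lemma P_path:
  assumes a0: "a0 \<in> Xs"
  shows "(\<Sum>z\<in>Xs. (f z - f a0)^2) \<le> real (card Xs) * ((real (card Xs) - 1) * SX f)"
proof -
  have "(\<Sum>z\<in>Xs. (f z - f a0)^2) \<le> (\<Sum>z\<in>Xs. (real (card Xs) - 1) * SX f)"
    by (rule sum_mono) (rule pair_bound[OF _ a0])
  then show ?thesis by simp
qed


lemma kappa_r: "kappa p \<alpha> \<nu> = (1 - r)^3 / 2"
proof -
  have "-(\<nu> - \<alpha>) / 2 = (\<alpha> - \<nu>) / 2" by simp
  then show ?thesis by (simp add: kappa_def r_def)
qed

lemma poinc:
  assumes m0: "(\<Sum>x\<in>UNIV. \<pi> x * f x) = 0"
  shows "kappa p \<alpha> \<nu> * h 1 /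
        (3 * (real (card Xs) * p powr (\<alpha> - \<nu>) + 1) * real (card Xs) * (real (card Xs) - 1) * EZ)
        * (\<Sum>x\<in>UNIV. \<pi> x * (f x)^2)
     \<le> (\<Sum>x\<in>UNIV. \<Sum>y\<in>UNIV. \<pi> x * Qh \<pi> N h x y * (f x - f y)^2) / 2"
proof -
  define M where "M = real (card Xs)"
  define q where "q = p powr (\<alpha> - \<nu>)"
  define A where "A = 3 * (M * q + 1) * M * (M - 1)"
  define X where "X = (\<Sum>x\<in>UNIV. \<pi> x * (f x)^2)"
  define E2 where "E2 = (\<Sum>x\<in>UNIV. \<Sum>y\<in>UNIV. wgt x y * (f x - f y)^2)"
  define h1 where "h1 = h 1"
  have h1p: "h1 > 0" unfolding h1_def by (rule hpos) simp
  have M2: "M \<ge> 2" using M_ge by (simp add: M_def)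
  have q0: "q \<ge> 0" by (simp add: q_def)
  have MM: "M * (M - 1) \<ge> 2" using mult_mono[of 2 M 1 "M - 1"] M2 by simp
  have A1: "A \<ge> M * (M - 1)"
  proof -
    have "M * q + 1 \<ge> 1" using M2 q0 by simp
    then have "3 * (M * q + 1) \<ge> 1" by simp
    then have "3 * (M * q + 1) * (M * (M - 1)) \<ge> 1 * (M * (M - 1))" using MM by (intro mult_right_mono) auto
    then show ?thesis by (simp add: A_def mult_ac)
  qed
  have Apos: "A > 0" using A1 MM by simp
  have A1': "A \<ge> 1" using A1 MM by simp
  obtain a0 where a0: "a0 \<in> Xs" using Xs_ne by blast
  define m where "m = f a0"
  have Xle: "X \<le> (\<Sum>x\<in>UNIV. \<pi> x * (f x - m)^2)"
  proof -
    have "(\<Sum>x\<in>UNIV. \<pi> x * (f x - m)^2) = X - 2 * m * (\<Sum>x\<in>UNIV. \<pi> x * f x) + m^2 * (\<Sum>x\<in>UNIV. \<pi> x)"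
      by (simp add: X_def power2_diff algebra_simps sum.distrib sum_subtractf sum_distrib_left sum_distrib_right)
    then show ?thesis using m0 pi_sum by simp
  qed
  have r0: "0 < 1 - r" using r_lt1 by simp
  have cp: "c > 0" by (rule c_pos)
  have Sxs: "(\<Sum>z\<in>Xs. (f z - m)^2) \<le> M * (M - 1) * SX f"
    using P_path[OF a0, of f] by (simp add: m_def M_def mult_ac)
  have B: "X \<le> c * (M * (M - 1) * SX f) / (1 - r) + D f / (1 - r)^2"
  proof -
    have "X \<le> c * (\<Sum>z\<in>Xs. (f z - m)^2) / (1 - r) + D f / (1 - r)^2"
      using Xle P_total[of f m] by linarith
    also have "c * (\<Sum>z\<in>Xs. (f z - m)^2) / (1 - r) \<le> c * (M * (M - 1) * SX f) / (1 - r)"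
      using Sxs cp r0 by (intro divide_right_mono mult_left_mono) auto
    finally show ?thesis by simp
  qed
  have kX: "kappa p \<alpha> \<nu> * X \<le> (c * (M * (M - 1) * SX f) + D f) / 2"
  proof -
    have k0: "kappa p \<alpha> \<nu> \<ge> 0" using r0 by (simp add: kappa_r)
    have "kappa p \<alpha> \<nu> * X \<le> kappa p \<alpha> \<nu> * (c * (M * (M - 1) * SX f) / (1 - r) + D f / (1 - r)^2)"
      using B k0 by (rule mult_left_mono)
    also have "\<dots> = ((1 - r)^2 * (c * (M * (M - 1) * SX f)) + (1 - r) * D f) / 2"
    proof -
      have gen: "s \<noteq> 0 \<Longrightarrow> s^3 / 2 * (U / s + V / s^2) = (s^2 * U + s * V) / 2" for s U V :: real
        by (simp add: field_simps power2_eq_square power3_eq_cube)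
      show ?thesis unfolding kappa_r by (rule gen) (use r0 in simp)
    qed
    also have "\<dots> \<le> (c * (M * (M - 1) * SX f) + D f) / 2"
    proof -
      have t0: "c * (M * (M - 1) * SX f) \<ge> 0" using cp MM SX_nn[of f] by simp
      have "(1 - r)^2 \<le> 1" using r0 r_lt1 r_pos by (simp add: power_le_one)
      then have "(1 - r)^2 * (c * (M * (M - 1) * SX f)) \<le> 1 * (c * (M * (M - 1) * SX f))"
        using t0 by (rule mult_right_mono)
      moreover have "(1 - r) * D f \<le> 1 * D f" using D_nn[of f] r_pos by (intro mult_right_mono) auto
      ultimately show ?thesis by simp
    qed
    finally show ?thesis .
  qed
  have div: "(c * (M * (M - 1) * SX f) + D f) / A \<le> 2 * D f + c * SX f"
  proof -
    have t1: "c * (M * (M - 1) * SX f) \<le> A * (c * SX f)"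
    proof -
      have "M * (M - 1) * (c * SX f) \<le> A * (c * SX f)"
        using A1 cp SX_nn[of f] by (intro mult_right_mono) auto
      then show ?thesis by (simp add: mult_ac)
    qed
    have t2: "D f \<le> A * (2 * D f)"
    proof -
      have "1 * D f \<le> A * D f" using A1' D_nn[of f] by (intro mult_right_mono) auto
      then show ?thesis using D_nn[of f] Apos by simp
    qed
    have "c * (M * (M - 1) * SX f) + D f \<le> A * (2 * D f + c * SX f)" using t1 t2 by (simp add: algebra_simps)
    then show ?thesis using Apos by (simp add: divide_le_eq mult.commute)
  qed
  have E2b: "E2 \<ge> h1 * (2 * D f + c * SX f)" unfolding E2_def h1_def by (rule P_energy)
  have "kappa p \<alpha> \<nu> * h1 / A * X = h1 * (kappa p \<alpha> \<nu> * X / A)" by simp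
  also have "\<dots> \<le> h1 * ((c * (M * (M - 1) * SX f) + D f) / 2 / A)"
    using kX Apos h1p by (intro mult_left_mono divide_right_mono) auto
  also have "\<dots> = h1 * ((c * (M * (M - 1) * SX f) + D f) / A) / 2" by simp
  also have "\<dots> \<le> h1 * (2 * D f + c * SX f) / 2"
    using div h1p by (intro divide_right_mono mult_left_mono) auto
  also have "\<dots> \<le> E2 / 2" using E2b by simp
  finally have main: "kappa p \<alpha> \<nu> * h1 / A * X \<le> E2 / 2" .
  have Qsum: "(\<Sum>x\<in>UNIV. \<Sum>y\<in>UNIV. \<pi> x * Qh \<pi> N h x y * (f x - f y)^2) = E2 / EZ"
    by (simp add: dirichlet E2_def sum_divide_distrib)
  have "kappa p \<alpha> \<nu> * h 1 / (3 * (real (card Xs) * p powr (\<alpha> - \<nu>) + 1) * real (card Xs) * (real (card Xs) - 1) * EZ) * X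
      = (kappa p \<alpha> \<nu> * h1 / A * X) / EZ"
    by (simp add: A_def M_def q_def h1_def)
  also have "\<dots> \<le> (E2 / 2) / EZ" using main EZpos by (intro divide_right_mono) auto
  also have "\<dots> = (E2 / EZ) / 2" by simp
  finally show ?thesis unfolding Qsum X_def .
qed

lemma gap_main:
  "Gap (Qh \<pi> N h) \<ge> kappa p \<alpha> \<nu> * h 1 /
        (3 * (real (card Xs) * p powr (\<alpha> - \<nu>) + 1) * real (card Xs) * (real (card Xs) - 1) * expect \<pi> (Zh \<pi> N h))"
proof -
  obtain a where a: "a \<in> Xs" using Xs_ne by blast
  have "card (Xs - {a}) \<ge> 1" using M_ge a by simp
  then obtain b where b: "b \<in> Xs - {a}" by (metis all_not_in_conv card.empty not_one_le_zero)
  then have ab: "a \<noteq> b" by blast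
  have gpos: "kappa p \<alpha> \<nu> * h 1 /
        (3 * (real (card Xs) * p powr (\<alpha> - \<nu>) + 1) * real (card Xs) * (real (card Xs) - 1) * EZ) > 0"
  proof -
    have "kappa p \<alpha> \<nu> > 0" using r_lt1 by (simp add: kappa_r)
    moreover have "h 1 > 0" by (rule hpos) simp
    moreover have "real (card Xs) * p powr (\<alpha> - \<nu>) + 1 > 0" by (simp add: add_nonneg_pos)
    moreover have "real (card Xs) > 0" "real (card Xs) - 1 > 0" using M_ge by auto
    ultimately show ?thesis using EZpos by simp
  qed
  have "kappa p \<alpha> \<nu> * h 1 /
        (3 * (real (card Xs) * p powr (\<alpha> - \<nu>) + 1) * real (card Xs) * (real (card Xs) - 1) * EZ) \<le> Gap (Qh \<pi> N h)"
    by (rule gap_abstract[OF pi_pos pi_sum Q_sym Q_rows ab gpos poinc])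
  then show ?thesis by (simp add: EZ_def Z_def)
qed

end

theorem theorem2:
  fixes \<pi> :: "'a::finite \<Rightarrow> real" and N :: "'a \<Rightarrow> 'a set"
    and p \<alpha> \<nu> :: real and Xs :: "'a set" and T :: "'a \<Rightarrow> 'a"
  assumes pi_pos: "\<forall>x. \<pi> x > 0" and pi_sum: "(\<Sum>x\<in>UNIV. \<pi> x) = 1"
    and p_gt: "p > 1" and alpha_pos: "\<alpha> > 0"
    and N_sym: "\<forall>x y. y \<in> N x \<longleftrightarrow> x \<in> N y" and N_irrefl: "\<forall>x. x \<notin> N x"
    and N_irr: "\<forall>K. stochastic K \<and> (\<forall>x y. K x y > 0 \<longleftrightarrow> y \<in> N x) \<longrightarrow> irreducible K"
    and N_card: "\<forall>x. real (card (N x)) \<le> p powr \<alpha>"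
    and M_ge: "card Xs \<ge> 2"
    and nu_gt: "\<nu> > \<alpha>"
    and cond_i: "\<forall>x\<in>Xs. \<forall>x'\<in>Xs. \<pi> x = \<pi> x'"
    and cond_ii: "\<forall>x. T x \<in> N x"
    and cond_iii: "\<forall>x. x \<notin> Xs \<longrightarrow> \<pi> (T x) \<ge> p powr \<nu> * \<pi> x"
  shows "(\<forall>h. balancing h \<and> irreducible_on Xs (restrict_kernel (Kh \<pi> N h) Xs) \<longrightarrow>
            Gap (Qh \<pi> N h) \<ge>
              kappa p \<alpha> \<nu> * h 1 /
              (3 * (real (card Xs) * p powr (\<alpha> - \<nu>) + 1) * real (card Xs) * (real (card Xs) - 1)
                 * expect \<pi> (Zh \<pi> N h)))
       \<and> (\<lambda>u::real. 1 + u) 1 \<ge> 1 \<and> (\<lambda>u::real. min 1 u) 1 \<ge> 1 \<and> (\<lambda>u::real. sqrt u) 1 \<ge> 1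
       \<and> expect \<pi> (Zh \<pi> N (\<lambda>u. 1 + u)) \<le> 2 * p powr \<alpha>
       \<and> expect \<pi> (Zh \<pi> N (\<lambda>u. min 1 u)) \<le> 2 * p powr (2 * \<alpha> - \<nu>) + (real (card Xs) - 1)
       \<and> expect \<pi> (Zh \<pi> N (\<lambda>u. sqrt u)) \<le>
           p powr (2 * \<alpha> - \<nu>) + 2 * p powr (\<alpha> - \<nu> / 2) + (real (card Xs) - 1)"
proof -
  interpret C: chn \<pi> N p \<alpha> \<nu> Xs T
    by unfold_locales (fact pi_pos pi_sum p_gt alpha_pos N_sym N_irrefl N_card M_ge nu_gt cond_i cond_ii cond_iii)+
  have G: "\<forall>h. balancing h \<and> irreducible_on Xs (restrict_kernel (Kh \<pi> N h) Xs) \<longrightarrow>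
            Gap (Qh \<pi> N h) \<ge>
              kappa p \<alpha> \<nu> * h 1 /
              (3 * (real (card Xs) * p powr (\<alpha> - \<nu>) + 1) * real (card Xs) * (real (card Xs) - 1)
                 * expect \<pi> (Zh \<pi> N h))"
  proof (intro allI impI)
    fix h :: "real \<Rightarrow> real"
    assume hh: "balancing h \<and> irreducible_on Xs (restrict_kernel (Kh \<pi> N h) Xs)"
    then have bal: "balancing h" and irr: "irreducible_on Xs (restrict_kernel (Kh \<pi> N h) Xs)" by auto
    interpret H: chnh \<pi> N p \<alpha> \<nu> Xs T h
      by unfold_locales (fact pi_pos pi_sum p_gt alpha_pos N_sym N_irrefl N_card M_ge nu_gt cond_i cond_ii cond_iii N_irr bal irr)+
    show "Gap (Qh \<pi> N h) \<ge>
              kappa p \<alpha> \<nu> * h 1 /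
              (3 * (real (card Xs) * p powr (\<alpha> - \<nu>) + 1) * real (card Xs) * (real (card Xs) - 1)
                 * expect \<pi> (Zh \<pi> N h))"
      by (rule H.gap_main)
  qed
  show ?thesis using G C.Z1 C.Z2 C.Z3 by simp
qed

end
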